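(* Let $Q$ be an irreducible transition matrix on a finite set $\Sigma\subset\mathbb{R}$ with invariant distribution $\mu$, let $\gamma\in(0,1)$, and for each $N$ let $\mathbb{P}^{(N)}$ be the law of the Markov chain $\omega=(\omega_n)_{n\ge0}$ on $\Sigma$ with transition matrix $Q^{(N)}=\mathrm{Id}+N^{-\gamma}(Q-\mathrm{Id})$ started from $\mu$ (which is invariant for $Q^{(N)}$). Then for all $\beta\ge0$, $h\in\mathbb{R}$, $$\mathbb{E}^{(N)}\Big[\frac1N\log Z_{N,\beta,h,\omega}\Big]\xrightarrow[N\to\infty]{}\sum_{x\in\Sigma}\mu(x)F(h+\beta x).$$
   Context: $\tau$ is a renewal process with $\tau_0=0$ and interarrival law $K(n)=L(n)n^{-(1+\alpha)}$, $n\ge1$, with $\alpha\ge0$, $L$ positive slowly varying, $\sum_nK(n)=1$; $\delta_n=\mathbf 1_{\{n\in\tau\}}$; $E$ is expectation over $\tau$, and $\omega$ is independent of $\tau$. $Z_{N,\beta,h,\omega}=E\big[\exp\big(\sum_{n=1}^N(\beta\omega_n+h)\delta_n\big)\delta_N\big]$. $F(h):=\lim_{N}\frac1N\log E[\exp(h\sum_{n=1}^N\delta_n)\delta_N]$ is the homogeneous free energy (nonnegative, zero iff $h\le0$). $\mathbb{E}^{(N)}$ is expectation under $\mathbb{P}^{(N)}$. *)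

theory Defs
  imports "HOL-Analysis.Analysis"
begin

definition slowly_varying :: "(real \<Rightarrow> real) \<Rightarrow> bool" where
  "slowly_varying L \<longleftrightarrow> L \<in> borel_measurable borel \<and> (\<forall>x>0. L x > 0) \<and>
     (\<forall>a>0. ((\<lambda>x. L (a * x) / L x) \<longlongrightarrow> 1) at_top)"

text \<open>Renewal probability P(tau \<inter> [1,N] = S) * (indicator N in S) for a renewal process started
  at 0 with interarrival law K: product of K over consecutive gaps of {0} \<union> S.\<close>
definition renewal_weight :: "(nat \<Rightarrow> real) \<Rightarrow> nat set \<Rightarrow> real" where
  "renewal_weight K S = (\<Prod>s\<in>S. K (s - Max {t \<in> insert 0 S. t < s}))"

text \<open>Z_{N,beta,h,omega} = E[exp(sum_{n=1}^N (beta omega_n + h) delta_n) delta_N], expectation over tau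
  written as the sum over the possible sets tau \<inter> {1..N} containing N.\<close>
definition Zpart :: "(nat \<Rightarrow> real) \<Rightarrow> real \<Rightarrow> real \<Rightarrow> (nat \<Rightarrow> real) \<Rightarrow> nat \<Rightarrow> real" where
  "Zpart K \<beta> h \<omega> N =
     (if N = 0 then 1 else
      (\<Sum>S\<in>{S \<in> Pow {1..N}. N \<in> S}. renewal_weight K S * exp (\<Sum>n\<in>S. \<beta> * \<omega> n + h)))"

definition hom_F :: "(nat \<Rightarrow> real) \<Rightarrow> real \<Rightarrow> real" where
  "hom_F K h = lim (\<lambda>N. ln (Zpart K 0 h (\<lambda>_. 0) N) / real N)"

fun matpow :: "real set \<Rightarrow> (real \<Rightarrow> real \<Rightarrow> real) \<Rightarrow> nat \<Rightarrow> real \<Rightarrow> real \<Rightarrow> real" where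
  "matpow \<Sigma> Q 0 x y = (if x = y then 1 else 0)"
| "matpow \<Sigma> Q (Suc n) x y = (\<Sum>z\<in>\<Sigma>. matpow \<Sigma> Q n x z * Q z y)"

definition stochastic_matrix :: "real set \<Rightarrow> (real \<Rightarrow> real \<Rightarrow> real) \<Rightarrow> bool" where
  "stochastic_matrix \<Sigma> Q \<longleftrightarrow> (\<forall>x\<in>\<Sigma>. \<forall>y\<in>\<Sigma>. Q x y \<ge> 0) \<and> (\<forall>x\<in>\<Sigma>. (\<Sum>y\<in>\<Sigma>. Q x y) = 1)"

definition irreducible_matrix :: "real set \<Rightarrow> (real \<Rightarrow> real \<Rightarrow> real) \<Rightarrow> bool" where
  "irreducible_matrix \<Sigma> Q \<longleftrightarrow> (\<forall>x\<in>\<Sigma>. \<forall>y\<in>\<Sigma>. \<exists>n. matpow \<Sigma> Q n x y > 0)"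

definition invariant_distribution :: "real set \<Rightarrow> (real \<Rightarrow> real \<Rightarrow> real) \<Rightarrow> (real \<Rightarrow> real) \<Rightarrow> bool" where
  "invariant_distribution \<Sigma> Q \<mu> \<longleftrightarrow> (\<forall>x\<in>\<Sigma>. \<mu> x \<ge> 0) \<and> (\<Sum>x\<in>\<Sigma>. \<mu> x) = 1 \<and>
     (\<forall>y\<in>\<Sigma>. (\<Sum>x\<in>\<Sigma>. \<mu> x * Q x y) = \<mu> y)"

definition QN :: "(real \<Rightarrow> real \<Rightarrow> real) \<Rightarrow> real \<Rightarrow> nat \<Rightarrow> real \<Rightarrow> real \<Rightarrow> real" where
  "QN Q \<gamma> N x y = (if x = y then 1 else 0) + real N powr (-\<gamma>) * (Q x y - (if x = y then 1 else 0))"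

definition markov_expect :: "real set \<Rightarrow> (real \<Rightarrow> real) \<Rightarrow> (real \<Rightarrow> real \<Rightarrow> real) \<Rightarrow> nat
    \<Rightarrow> ((nat \<Rightarrow> real) \<Rightarrow> real) \<Rightarrow> real" where
  "markov_expect \<Sigma> \<mu> P N f =
     (\<Sum>\<omega>\<in>PiE {0..N} (\<lambda>_. \<Sigma>). \<mu> (\<omega> 0) * (\<Prod>i\<in>{1..N}. P (\<omega> (i - 1)) (\<omega> i)) * f \<omega>)"

end

theory Submission
  imports Defs
begin

fun Wf :: "(nat \<Rightarrow> real) \<Rightarrow> (nat \<Rightarrow> real) \<Rightarrow> nat \<Rightarrow> nat \<Rightarrow> real" where
"Wf K v a k = (if k = 0 then 1 else exp (v (a+k)) * (\<Sum>j<k. Wf K v a j * K (k - j)))"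
declare Wf.simps[simp del]

definition Pset :: "nat \<Rightarrow> nat set set" where
  "Pset m = (if m = 0 then {{}} else {S \<in> Pow {1..m}. m \<in> S})"

definition ZS :: "(nat \<Rightarrow> real) \<Rightarrow> (nat \<Rightarrow> real) \<Rightarrow> nat \<Rightarrow> real" where
  "ZS K v N = (\<Sum>S\<in>Pset N. renewal_weight K S * exp (\<Sum>n\<in>S. v n))"

lemma Pset_sub: "S \<in> Pset m \<Longrightarrow> S \<subseteq> {1..m}"
  by (auto simp: Pset_def split: if_splits)

lemma Pset_Max: "S \<in> Pset m \<Longrightarrow> Max (insert 0 S) = m"
proof -
  assume S: "S \<in> Pset m"
  show ?thesis
  proof (cases "m = 0")
    case True thus ?thesis using S by (simp add: Pset_def)
  next
    case False
    then have "S \<subseteq> {1..m}" "m \<in> S" using S by (auto simp: Pset_def)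
    moreover have "finite S" using \<open>S \<subseteq> {1..m}\<close> finite_subset by blast
    ultimately show ?thesis by (intro Max_eqI) auto
  qed
qed

lemma Pset_finite: "finite (Pset m)"
  by (simp add: Pset_def)

lemma Pset_Union:
  assumes "N \<ge> 1"
  shows "Pset N = (\<Union>m\<in>{..<N}. insert N ` Pset m)"
proof
  show "Pset N \<subseteq> (\<Union>m\<in>{..<N}. insert N ` Pset m)"
  proof
    fix T assume T: "T \<in> Pset N"
    then have T1: "T \<subseteq> {1..N}" "N \<in> T" using assms by (auto simp: Pset_def)
    define S where "S = T - {N}"
    have fin: "finite S" using T1 S_def finite_subset by auto
    show "T \<in> (\<Union>m\<in>{..<N}. insert N ` Pset m)"
    proof (cases "S = {}")
      case True
      then have "T = insert N {}" using T1 S_def by auto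
      moreover have "{} \<in> Pset 0" by (simp add: Pset_def)
      ultimately show ?thesis using assms by force
    next
      case False
      define m where "m = Max S"
      have mS: "m \<in> S" using False fin m_def by simp
      have Sm: "S \<subseteq> {1..m}"
      proof
        fix x assume x: "x \<in> S"
        then have "x \<le> m" using fin m_def by simp
        moreover have "x \<ge> 1" using x T1 S_def by auto
        ultimately show "x \<in> {1..m}" by simp
      qed
      have mN: "m < N" using mS T1 S_def by auto
      have m1: "m \<ge> 1" using mS T1 S_def by auto
      have "S \<in> Pset m" using Sm mS m1 by (auto simp: Pset_def)
      moreover have "T = insert N S" using T1 S_def by auto
      ultimately show ?thesis using mN by blast
    qed
  qed
next
  show "(\<Union>m\<in>{..<N}. insert N ` Pset m) \<subseteq> Pset N"
  proof clarify
    fix m S assume "m < N" "S \<in> Pset m"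
    then show "insert N S \<in> Pset N" using assms Pset_sub[of S m] by (auto simp: Pset_def)
  qed
qed

lemma rw_insert:
  assumes S: "S \<in> Pset m" and mN: "m < N"
  shows "renewal_weight K (insert N S) = K (N - m) * renewal_weight K S"
proof -
  have Ssub: "S \<subseteq> {1..m}" using Pset_sub[OF S] .
  have fin: "finite S" using Ssub finite_subset by blast
  have NS: "N \<notin> S" using Ssub mN by auto
  have e1: "{t \<in> insert 0 (insert N S). t < N} = insert 0 S" using Ssub mN by auto
  have e2: "\<And>s. s \<in> S \<Longrightarrow> {t \<in> insert 0 (insert N S). t < s} = {t \<in> insert 0 S. t < s}"
    using Ssub mN by auto
  have "renewal_weight K (insert N S) =
     K (N - Max {t \<in> insert 0 (insert N S). t < N}) *
     (\<Prod>s\<in>S. K (s - Max {t \<in> insert 0 (insert N S). t < s}))"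
    unfolding renewal_weight_def using fin NS by simp
  also have "\<dots> = K (N - m) * renewal_weight K S"
    unfolding renewal_weight_def e1 Pset_Max[OF S] using e2 by (simp cong: prod.cong)
  finally show ?thesis .
qed

lemma ZS_rec:
  assumes "N \<ge> 1"
  shows "ZS K v N = exp (v N) * (\<Sum>m<N. ZS K v m * K (N - m))"
proof -
  have "ZS K v N = (\<Sum>m<N. \<Sum>T\<in>insert N ` Pset m. renewal_weight K T * exp (\<Sum>n\<in>T. v n))"
    unfolding ZS_def Pset_Union[OF assms]
  proof (rule sum.UNION_disjoint)
    show "finite {..<N}" by simp
    show "\<forall>i\<in>{..<N}. finite (insert N ` Pset i)" by (simp add: Pset_finite)
    show "\<forall>i\<in>{..<N}. \<forall>j\<in>{..<N}. i \<noteq> j \<longrightarrow> insert N ` Pset i \<inter> insert N ` Pset j = {}"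
    proof (intro ballI impI)
      fix i j assume ij: "i \<in> {..<N}" "j \<in> {..<N}" "i \<noteq> j"
      show "insert N ` Pset i \<inter> insert N ` Pset j = {}"
      proof (rule ccontr)
        assume "insert N ` Pset i \<inter> insert N ` Pset j \<noteq> {}"
        then obtain S S' where S: "S \<in> Pset i" "S' \<in> Pset j" "insert N S = insert N S'" by blast
        have "N \<notin> S" "N \<notin> S'" using Pset_sub[OF S(1)] Pset_sub[OF S(2)] ij by auto
        then have "S = S'" using S(3) by (metis insert_ident)
        then show False using Pset_Max[OF S(1)] Pset_Max[OF S(2)] ij by simp
      qed
    qed
  qed
  also have "\<dots> = (\<Sum>m<N. \<Sum>S\<in>Pset m. renewal_weight K (insert N S) * exp (\<Sum>n\<in>insert N S. v n))"
  proof (rule sum.cong[OF refl])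
    fix m assume "m \<in> {..<N}"
    have "inj_on (insert N) (Pset m)"
    proof
      fix S S' assume "S \<in> Pset m" "S' \<in> Pset m" "insert N S = insert N S'"
      moreover have "N \<notin> S" "N \<notin> S'" using Pset_sub[OF \<open>S \<in> Pset m\<close>] Pset_sub[OF \<open>S' \<in> Pset m\<close>] \<open>m \<in> {..<N}\<close> by auto
      ultimately show "S = S'" by (metis insert_ident)
    qed
    then show "(\<Sum>T\<in>insert N ` Pset m. renewal_weight K T * exp (\<Sum>n\<in>T. v n)) =
      (\<Sum>S\<in>Pset m. renewal_weight K (insert N S) * exp (\<Sum>n\<in>insert N S. v n))"
      by (simp add: sum.reindex)
  qed
  also have "\<dots> = (\<Sum>m<N. \<Sum>S\<in>Pset m. exp (v N) * (renewal_weight K S * exp (\<Sum>n\<in>S. v n)) * K (N - m))"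
  proof (intro sum.cong refl)
    fix m S assume m: "m \<in> {..<N}" and S: "S \<in> Pset m"
    have fin: "finite S" using Pset_sub[OF S] finite_subset by blast
    have NS: "N \<notin> S" using Pset_sub[OF S] m by auto
    show "renewal_weight K (insert N S) * exp (\<Sum>n\<in>insert N S. v n) =
      exp (v N) * (renewal_weight K S * exp (\<Sum>n\<in>S. v n)) * K (N - m)"
      using rw_insert[OF S] m fin NS by (simp add: exp_add)
  qed
  also have "\<dots> = exp (v N) * (\<Sum>m<N. ZS K v m * K (N - m))"
    unfolding ZS_def by (simp add: sum_distrib_left sum_distrib_right mult.assoc)
  finally show ?thesis .
qed

lemma ZS_Wf: "ZS K v N = Wf K v 0 N"
proof (induction N rule: less_induct)
  case (less N)
  show ?case
  proof (cases "N = 0")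
    case True
    then show ?thesis by (simp add: ZS_def Pset_def renewal_weight_def Wf.simps)
  next
    case False
    then show ?thesis using ZS_rec[of N K v] less by (simp add: Wf.simps[of K v 0 N])
  qed
qed

lemma Zpart_Wf: "Zpart K \<beta> h \<omega> N = Wf K (\<lambda>n. \<beta> * \<omega> n + h) 0 N"
proof -
  have "Zpart K \<beta> h \<omega> N = ZS K (\<lambda>n. \<beta> * \<omega> n + h) N"
    by (simp add: Zpart_def ZS_def Pset_def renewal_weight_def)
  then show ?thesis by (simp add: ZS_Wf)
qed

lemma Wf_nonneg:
  assumes Knn: "\<And>n. K n \<ge> 0"
  shows "Wf K v a k \<ge> 0"
proof (induction k rule: less_induct)
  case (less k)
  show ?case
    using less Knn by (subst Wf.simps) (auto intro!: sum_nonneg mult_nonneg_nonneg)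
qed

lemma Wf_lower:
  assumes Knn: "\<And>n. K n \<ge> 0"
  shows "Wf K v a k \<ge> (\<Prod>i\<in>{1..k}. K 1 * exp (v (a+i)))"
proof (induction k)
  case 0
  then show ?case by (simp add: Wf.simps)
next
  case (Suc k)
  have "(\<Prod>i\<in>{1..Suc k}. K 1 * exp (v (a+i))) = (\<Prod>i\<in>{1..k}. K 1 * exp (v (a+i))) * (K 1 * exp (v (a + Suc k)))"
    by (simp add: prod.nat_ivl_Suc')
  also have "\<dots> \<le> Wf K v a k * (K 1 * exp (v (a + Suc k)))"
    using Suc Knn by (intro mult_right_mono) auto
  also have "\<dots> = exp (v (a + Suc k)) * (Wf K v a k * K (Suc k - k))"
    by simp
  also have "\<dots> \<le> exp (v (a + Suc k)) * (\<Sum>j<Suc k. Wf K v a j * K (Suc k - j))"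
    using Knn Wf_nonneg[OF Knn]
    by (intro mult_left_mono member_le_sum[where f="\<lambda>j. Wf K v a j * K (Suc k - j)"]) auto
  also have "\<dots> = Wf K v a (Suc k)"
    by (subst (2) Wf.simps) simp
  finally show ?case .
qed

lemma Wf_cong:
  assumes "\<And>i. 1 \<le> i \<Longrightarrow> i \<le> k \<Longrightarrow> v (a+i) = v' (a'+i)"
  shows "Wf K v a k = Wf K v' a' k"
  using assms
proof (induction k rule: less_induct)
  case (less k)
  show ?case
  proof (cases "k = 0")
    case True then show ?thesis by (simp add: Wf.simps)
  next
    case False
    have "(\<Sum>j<k. Wf K v a j * K (k - j)) = (\<Sum>j<k. Wf K v' a' j * K (k - j))"
      using less.IH less.prems by (intro sum.cong refl) auto
    moreover have "v (a+k) = v' (a'+k)" using less.prems False by simp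
    ultimately show ?thesis using False by (simp add: Wf.simps[of K v a k] Wf.simps[of K v' a' k])
  qed
qed

lemma Wf_supermult:
  assumes Knn: "\<And>n. K n \<ge> 0"
  shows "Wf K v a (m+k) \<ge> Wf K v a m * Wf K v (a+m) k"
proof (induction k rule: less_induct)
  case (less k)
  show ?case
  proof (cases "k = 0")
    case True then show ?thesis by (simp add: Wf.simps)
  next
    case False
    have "Wf K v a m * Wf K v (a+m) k = exp (v (a+m+k)) * (\<Sum>j<k. Wf K v a m * Wf K v (a+m) j * K (k - j))"
      using False by (simp add: Wf.simps[of K v "a+m" k] sum_distrib_left mult_ac)
    also have "\<dots> \<le> exp (v (a+m+k)) * (\<Sum>j<k. Wf K v a (m+j) * K (m + k - (m+j)))"
      using less.IH Knn by (intro mult_left_mono sum_mono) (auto intro: mult_right_mono)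
    also have "(\<Sum>j<k. Wf K v a (m+j) * K (m + k - (m+j))) = (\<Sum>j\<in>(\<lambda>j. m+j) ` {..<k}. Wf K v a j * K (m + k - j))"
      by (simp add: sum.reindex)
    also have "\<dots> \<le> (\<Sum>j<m+k. Wf K v a j * K (m + k - j))"
      using Knn Wf_nonneg[OF Knn] by (intro sum_mono2) auto
    also have "exp (v (a+m+k)) * \<dots> = Wf K v a (m+k)"
      using False by (simp add: Wf.simps[of K v a "m+k"] add.assoc)
    finally show ?thesis by simp
  qed
qed

lemma sum_rev1: "(\<Sum>j<(n::nat). f (n - j)) = (\<Sum>g\<in>{1..n}. (f g :: real))"
  by (rule sum.reindex_bij_witness[where i="\<lambda>g. n - g" and j="\<lambda>j. n - j"]) auto

lemma fekete:
  fixes a :: "nat \<Rightarrow> real"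
  assumes sup: "\<And>m k. a (m+k) \<ge> a m + a k" and bd: "\<And>n. a n \<le> (B::real) * real n"
  shows "(\<lambda>n. a n / n) \<longlonglongrightarrow> (SUP n\<in>{1..}. a n / n)"
    and "\<And>n. n \<ge> 1 \<Longrightarrow> a n / n \<le> (SUP n\<in>{1..}. a n / n)"
proof -
  define s where "s = (SUP n\<in>{1..}. a n / n)"
  have bdd: "bdd_above ((\<lambda>n. a n / n) ` {1..})"
  proof (rule bdd_aboveI2)
    fix n :: nat assume "n \<in> {1..}"
    then show "a n / n \<le> B" using bd[of n] by (simp add: divide_le_eq mult.commute)
  qed
  show up: "\<And>n. n \<ge> 1 \<Longrightarrow> a n / n \<le> (SUP n\<in>{1..}. a n / n)"
    using bdd by (intro cSUP_upper) auto
  show "(\<lambda>n. a n / n) \<longlonglongrightarrow> (SUP n\<in>{1..}. a n / n)"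
    unfolding s_def[symmetric]
  proof (rule LIMSEQ_I)
    fix r :: real assume r: "r > 0"
    have "s - r/2 < s" using r by simp
    then have "\<exists>m\<in>{1..}. s - r/2 < a m / m"
      unfolding s_def by (subst (asm) less_cSUP_iff[OF _ bdd]) auto
    then obtain m where m: "m \<in> {1..}" "s - r/2 < a m / m" by blast
    have m1: "m \<ge> 1" using m by simp
    define c where "c = Min (a ` {..<m})"
    have cle: "\<And>j. j < m \<Longrightarrow> c \<le> a j" unfolding c_def by auto
    have qm: "a (q*m + j) \<ge> q * a m + a j" for q j
    proof (induction q)
      case 0 then show ?case by simp
    next
      case (Suc q)
      have "a (Suc q * m + j) = a (m + (q*m+j))" by (simp add: algebra_simps)
      also have "\<dots> \<ge> a m + a (q*m+j)" by (rule sup)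
      finally show ?case using Suc by (simp add: algebra_simps)
    qed
    define E where "E = \<bar>a m\<bar> + \<bar>c\<bar>"
    obtain n0 :: nat where n0: "n0 > 2 * E / r" using reals_Archimedean2 by blast
    show "\<exists>no. \<forall>n\<ge>no. norm (a n / n - s) < r"
    proof (intro exI[of _ "max n0 m"] allI impI)
      fix n assume n: "n \<ge> max n0 m"
      then have n1: "n \<ge> 1" using m1 by simp
      have npos: "real n > 0" using n1 by simp
      define q where "q = n div m"
      define j where "j = n mod m"
      have nqj: "n = q*m + j" unfolding q_def j_def by simp
      have jm: "j < m" unfolding j_def using m1 by simp
      have "a n \<ge> q * a m + c" using qm[of q j] cle[OF jm] nqj by simp
      moreover have "q * a m \<ge> (n / m) * a m - \<bar>a m\<bar>"
      proof -
        have "real n = q * m + j" using nqj by simp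
        then have "(n/m) * a m = q * a m + (j/m) * a m" using m1 by (simp add: field_simps)
        moreover have "\<bar>(j/m) * a m\<bar> \<le> \<bar>a m\<bar>"
        proof -
          have "real j * \<bar>a m\<bar> \<le> real m * \<bar>a m\<bar>" using jm by (intro mult_right_mono) auto
          then show ?thesis using m1 by (simp add: abs_mult divide_le_eq mult.commute)
        qed
        ultimately show ?thesis by linarith
      qed
      ultimately have "a n \<ge> (n/m) * a m - E" unfolding E_def by linarith
      then have "a n / n \<ge> ((n/m) * a m - E) / n" using npos by (simp add: divide_right_mono)
      moreover have "((n/m) * a m - E) / n = a m / m - E / n" using npos by (simp add: field_simps)
      ultimately have "a n / n \<ge> a m / m - E / n" by simp
      moreover have "E / n < r/2"
      proof -
        have "real n \<ge> n0" using n by simp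
        then have "real n > 2 * E / r" using n0 by linarith
        then show ?thesis using r npos by (simp add: field_simps)
      qed
      ultimately have lo: "a n / n > s - r" using m by linarith
      have "a n / n \<le> s" unfolding s_def using up n1 by simp
      then show "norm (a n / n - s) < r" using lo r by simp
    qed
  qed
qed

definition zz :: "(nat \<Rightarrow> real) \<Rightarrow> real \<Rightarrow> nat \<Rightarrow> real" where
  "zz K c n = Wf K (\<lambda>_. c) 0 n"

lemma Wf_ge_single:
  assumes Knn: "\<And>n. K n \<ge> 0" and k: "k \<ge> 1"
  shows "Wf K v a k \<ge> exp (v (a+k)) * K k"
proof -
  have "exp (v (a+k)) * K k = exp (v (a+k)) * (Wf K v a 0 * K (k - 0))" by (simp add: Wf.simps)
  also have "\<dots> \<le> exp (v (a+k)) * (\<Sum>j<k. Wf K v a j * K (k - j))"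
    using Knn Wf_nonneg[where K=K, OF Knn] k
    by (intro mult_left_mono member_le_sum[where f="\<lambda>j. Wf K v a j * K (k - j)"]) auto
  also have "\<dots> = Wf K v a k" using k by (subst (2) Wf.simps) simp
  finally show ?thesis .
qed

locale Kass =
  fixes K :: "nat \<Rightarrow> real"
  assumes Knn: "\<And>n. K n \<ge> 0" and K1: "K 1 > 0" and Ksum: "\<And>n. (\<Sum>g\<in>{1..n}. K g) \<le> 1"
begin

lemma zz_pos: "zz K c n > 0"
proof -
  have "zz K c n \<ge> (\<Prod>i\<in>{1..n}. K 1 * exp c)" unfolding zz_def using Wf_lower[where K=K, OF Knn, of "\<lambda>_. c" 0 n] by simp
  moreover have "(\<Prod>i\<in>{1..n}. K 1 * exp c) > 0" using K1 by (intro prod_pos) auto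
  ultimately show ?thesis by linarith
qed

lemma zz_rec: "n \<ge> 1 \<Longrightarrow> zz K c n = exp c * (\<Sum>g\<in>{1..n}. zz K c (n - g) * K g)"
proof -
  assume n: "n \<ge> 1"
  have "zz K c n = exp c * (\<Sum>j<n. zz K c j * K (n - j))" unfolding zz_def using n by (subst Wf.simps) simp
  also have "(\<Sum>j<n. zz K c j * K (n - j)) = (\<Sum>j<n. (\<lambda>g. zz K c (n - g) * K g) (n - j))"
    by (intro sum.cong refl) (simp add: diff_diff_cancel less_imp_le)
  also have "\<dots> = (\<Sum>g\<in>{1..n}. zz K c (n - g) * K g)" by (rule sum_rev1)
  finally show ?thesis .
qed

lemma zz_upper: "zz K c n \<le> exp (\<bar>c\<bar> * n)"
proof (induction n rule: less_induct)
  case (less n)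
  show ?case
  proof (cases "n = 0")
    case True then show ?thesis by (simp add: zz_def Wf.simps)
  next
    case False
    then have n1: "n \<ge> 1" by simp
    have pw: "zz K c (n - g) * K g \<le> exp (\<bar>c\<bar> * (n - 1)) * K g" if g: "g \<in> {1..n}" for g
    proof -
      have "zz K c (n - g) \<le> exp (\<bar>c\<bar> * real (n - g))" using less.IH[of "n - g"] g by simp
      also have "\<dots> \<le> exp (\<bar>c\<bar> * (n - 1))" using g by (intro exp_mono mult_left_mono) (auto simp: of_nat_diff)
      finally show ?thesis using Knn[of g] by (intro mult_right_mono)
    qed
    have r1: "real (n - 1) = real n - 1" using n1 by (simp add: of_nat_diff)
    have s1: "(\<Sum>g\<in>{1..n}. zz K c (n - g) * K g) \<le> (\<Sum>g\<in>{1..n}. exp (\<bar>c\<bar> * (n - 1)) * K g)"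
      by (rule sum_mono) (rule pw)
    have s0: "0 \<le> (\<Sum>g\<in>{1..n}. zz K c (n - g) * K g)"
      by (intro sum_nonneg mult_nonneg_nonneg Knn less_imp_le[OF zz_pos])
    have "zz K c n = exp c * (\<Sum>g\<in>{1..n}. zz K c (n - g) * K g)" by (rule zz_rec[OF n1])
    also have "\<dots> \<le> exp \<bar>c\<bar> * (\<Sum>g\<in>{1..n}. exp (\<bar>c\<bar> * (n - 1)) * K g)"
      using s1 s0 by (intro mult_mono) auto
    also have "\<dots> = (exp \<bar>c\<bar> * exp (\<bar>c\<bar> * (n - 1))) * (\<Sum>g\<in>{1..n}. K g)"
      using r1 by (simp add: sum_distrib_left[symmetric] mult.assoc)
    also have "\<dots> = exp (\<bar>c\<bar> * n) * (\<Sum>g\<in>{1..n}. K g)"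
    proof -
      have "exp \<bar>c\<bar> * exp (\<bar>c\<bar> * (n - 1)) = exp (\<bar>c\<bar> * n)"
        using r1 by (simp add: exp_add[symmetric] algebra_simps)
      then show ?thesis by simp
    qed
    also have "\<dots> \<le> exp (\<bar>c\<bar> * n)" using Ksum[of n] by (simp add: mult_left_le)
    finally show ?thesis .
  qed
qed

lemma zz_super: "zz K c (m+k) \<ge> zz K c m * zz K c k"
proof -
  have "Wf K (\<lambda>_. c) m k = Wf K (\<lambda>_. c) 0 k" by (rule Wf_cong) simp
  then show ?thesis using Wf_supermult[where K=K, OF Knn, of "\<lambda>_. c" 0 m k] unfolding zz_def by simp
qed

lemma lnzz_props:
  shows "(\<lambda>n. ln (zz K c n) / n) \<longlonglongrightarrow> hom_F K c"
    and "\<And>n. n \<ge> 1 \<Longrightarrow> ln (zz K c n) / n \<le> hom_F K c"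
proof -
  have sup: "\<And>m k. ln (zz K c (m+k)) \<ge> ln (zz K c m) + ln (zz K c k)"
  proof -
    fix m k
    have "ln (zz K c m * zz K c k) \<le> ln (zz K c (m+k))"
      using zz_super zz_pos by (intro ln_mono) (auto intro: mult_pos_pos)
    moreover have "ln (zz K c m * zz K c k) = ln (zz K c m) + ln (zz K c k)"
      using zz_pos by (intro ln_mult_pos) auto
    ultimately show "ln (zz K c (m+k)) \<ge> ln (zz K c m) + ln (zz K c k)" by simp
  qed
  have bd: "\<And>n. ln (zz K c n) \<le> \<bar>c\<bar> * n"
  proof -
    fix n
    have "ln (zz K c n) \<le> ln (exp (\<bar>c\<bar> * n))" using zz_upper zz_pos by (intro ln_mono) auto
    then show "ln (zz K c n) \<le> \<bar>c\<bar> * n" by simp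
  qed
  have hF: "hom_F K c = lim (\<lambda>n. ln (zz K c n) / n)"
    unfolding hom_F_def zz_def using Zpart_Wf[of K 0 c "\<lambda>_. 0"] by simp
  note f = fekete[where a="\<lambda>n. ln (zz K c n)", OF sup bd]
  have eq: "hom_F K c = (SUP n\<in>{1..}. ln (zz K c n) / n)"
    unfolding hF using f(1) by (rule limI)
  show "(\<lambda>n. ln (zz K c n) / n) \<longlonglongrightarrow> hom_F K c" unfolding eq by (rule f(1))
  show "\<And>n. n \<ge> 1 \<Longrightarrow> ln (zz K c n) / n \<le> hom_F K c" unfolding eq by (rule f(2))
qed

lemma F_nonneg:
  assumes Hsub: "\<And>\<epsilon> M. \<epsilon> > 0 \<Longrightarrow> \<exists>n\<ge>M. n \<ge> 1 \<and> K n > 0 \<and> ln (K n) \<ge> - \<epsilon> * n"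
  shows "hom_F K c \<ge> 0"
proof (rule ccontr)
  assume "\<not> hom_F K c \<ge> 0"
  then have neg: "hom_F K c < 0" by simp
  define \<epsilon> where "\<epsilon> = - hom_F K c / 2"
  have e: "\<epsilon> > 0" using neg \<epsilon>_def by simp
  obtain M :: nat where M: "M > \<bar>c\<bar> / \<epsilon>" using reals_Archimedean2 by blast
  obtain n where n: "n \<ge> M" "n \<ge> 1" "K n > 0" "ln (K n) \<ge> - \<epsilon> * n" using Hsub[OF e, of M] by blast
  have npos: "real n > 0" using n by simp
  have "zz K c n \<ge> exp c * K n"
    unfolding zz_def using Wf_ge_single[where K=K, OF Knn n(2), of "\<lambda>_. c" 0] by simp
  then have "ln (zz K c n) \<ge> ln (exp c * K n)" using n(3) by (intro ln_mono) auto
  then have "ln (zz K c n) \<ge> c - \<epsilon> * n" using n(3,4) by (simp add: ln_mult)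
  moreover have "ln (zz K c n) \<le> hom_F K c * n"
    using lnzz_props(2)[OF n(2)] npos by (simp add: divide_le_eq)
  ultimately have "c - \<epsilon> * n \<le> - 2 * \<epsilon> * n" unfolding \<epsilon>_def by simp
  then have "\<epsilon> * n \<le> - c" by simp
  moreover have "\<epsilon> * n > \<bar>c\<bar>"
  proof -
    have "real n > \<bar>c\<bar> / \<epsilon>" using M n(1) by linarith
    then show ?thesis using e by (simp add: field_simps)
  qed
  ultimately show False by linarith
qed

lemma F_tilt: "(\<Sum>g\<in>{1..m}. K g * exp (c - hom_F K c * g)) \<le> 1"
proof (rule ccontr)
  define F where "F = hom_F K c"
  define G where "G = (\<Sum>g\<in>{1..m}. K g * exp (c - F * g))"
  assume "\<not> (\<Sum>g\<in>{1..m}. K g * exp (c - hom_F K c * g)) \<le> 1"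
  then have G1: "G > 1" unfolding G_def F_def by simp
  have m1: "m \<ge> 1" using G1 unfolding G_def by (cases "m = 0") auto
  define \<delta> where "\<delta> = ln G / m"
  have dpos: "\<delta> > 0" using G1 m1 unfolding \<delta>_def by simp
  define F' where "F' = F + \<delta>"
  define G' where "G' = (\<Sum>g\<in>{1..m}. K g * exp (c - F' * g))"
  have pw: "K g * exp (c - F * g) * exp (- \<delta> * m) \<le> K g * exp (c - F' * g)" if g: "g \<in> {1..m}" for g
  proof -
    have "exp (c - F * g) * exp (- \<delta> * m) \<le> exp (c - F' * g)"
      unfolding F'_def exp_add[symmetric] using g dpos by (intro exp_mono) (auto simp: algebra_simps intro!: mult_left_mono)
    then show ?thesis using Knn[of g] by (simp add: mult.assoc mult_left_mono)
  qed
  have "(\<Sum>g\<in>{1..m}. K g * exp (c - F * g) * exp (- \<delta> * m)) \<le> G'"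
    unfolding G'_def by (rule sum_mono) (rule pw)
  moreover have "(\<Sum>g\<in>{1..m}. K g * exp (c - F * g) * exp (- \<delta> * m)) = G * exp (- \<delta> * m)"
    unfolding G_def by (simp add: sum_distrib_right)
  moreover have "G * exp (- \<delta> * m) = 1" unfolding \<delta>_def using m1 G1 by (simp add: exp_minus)
  ultimately have G'1: "G' \<ge> 1" by linarith
  define C0 where "C0 = Min ((\<lambda>n. zz K c n * exp (- F' * n)) ` {..m})"
  have C0pos: "C0 > 0" unfolding C0_def using zz_pos by (subst Min_gr_iff) auto
  have low: "zz K c n \<ge> C0 * exp (F' * n)" for n
  proof (induction n rule: less_induct)
    case (less n)
    show ?case
    proof (cases "n \<le> m")
      case True
      then have "C0 \<le> zz K c n * exp (- F' * n)" unfolding C0_def by (intro Min_le) auto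
      then have "C0 * exp (F' * n) \<le> zz K c n * exp (- F' * n) * exp (F' * n)" by (intro mult_right_mono) auto
      also have "\<dots> = zz K c n" by (simp add: mult.assoc exp_add[symmetric])
      finally show ?thesis .
    next
      case False
      then have n1: "n \<ge> 1" using m1 by simp
      have "C0 * exp (F' * n) \<le> C0 * exp (F' * n) * G'" using G'1 C0pos by simp
      also have "\<dots> = exp c * (\<Sum>g\<in>{1..m}. C0 * exp (F' * real (n - g)) * K g)"
        unfolding G'_def using False
        by (simp add: sum_distrib_left mult_ac exp_add[symmetric] algebra_simps)

      also have "\<dots> \<le> exp c * (\<Sum>g\<in>{1..m}. zz K c (n - g) * K g)"
      proof -
        have "C0 * exp (F' * real (n - g)) * K g \<le> zz K c (n - g) * K g" if g: "g \<in> {1..m}" for g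
          using less.IH[of "n - g"] g False Knn[of g] by (intro mult_right_mono) auto
        then show ?thesis by (intro mult_left_mono sum_mono) auto
      qed
      also have "\<dots> \<le> exp c * (\<Sum>g\<in>{1..n}. zz K c (n - g) * K g)"
        using False by (intro mult_left_mono sum_mono2) (auto intro!: mult_nonneg_nonneg less_imp_le[OF zz_pos] Knn)
      also have "\<dots> = zz K c n" using zz_rec[OF n1] by simp
      finally show ?thesis .
    qed
  qed
  obtain n :: nat where n: "n > \<bar>ln C0\<bar> / \<delta>" using reals_Archimedean2 by blast
  moreover have "\<bar>ln C0\<bar> / \<delta> \<ge> 0" using dpos by simp
  ultimately have n1: "n \<ge> 1" by (cases "n = 0") auto
  have npos: "real n > 0" using n1 by simp
  have "ln (zz K c n) \<ge> ln (C0 * exp (F' * n))" using low[of n] C0pos by (intro ln_mono) auto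
  then have a1: "ln (zz K c n) \<ge> ln C0 + F' * n" using C0pos by (simp add: ln_mult)
  have a2: "ln (zz K c n) \<le> F * n" using lnzz_props(2)[OF n1] npos unfolding F_def by (simp add: divide_le_eq)
  have "\<delta> * n > \<bar>ln C0\<bar>" using n dpos by (simp add: field_simps)
  then show False using a1 a2 unfolding F'_def by (simp add: algebra_simps)
qed

end

lemma ME_cong:
  assumes "\<And>w. w \<in> PiE {0..N} (\<lambda>_. \<Sigma>) \<Longrightarrow> f w = g w"
  shows "markov_expect \<Sigma> \<mu> P N f = markov_expect \<Sigma> \<mu> P N g"
  unfolding markov_expect_def using assms by (intro sum.cong refl) auto

lemma ME_add: "markov_expect \<Sigma> \<mu> P N (\<lambda>w. f w + g w) = markov_expect \<Sigma> \<mu> P N f + markov_expect \<Sigma> \<mu> P N g"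
  unfolding markov_expect_def by (simp add: distrib_left sum.distrib)

lemma ME_diff: "markov_expect \<Sigma> \<mu> P N (\<lambda>w. f w - g w) = markov_expect \<Sigma> \<mu> P N f - markov_expect \<Sigma> \<mu> P N g"
  unfolding markov_expect_def by (simp add: right_diff_distrib sum_subtractf)

lemma ME_cmult: "markov_expect \<Sigma> \<mu> P N (\<lambda>w. c * f w) = c * markov_expect \<Sigma> \<mu> P N f"
  unfolding markov_expect_def by (simp add: sum_distrib_left mult_ac)

lemma ME_divide: "markov_expect \<Sigma> \<mu> P N (\<lambda>w. f w / c) = markov_expect \<Sigma> \<mu> P N f / c"
  unfolding markov_expect_def by (simp add: sum_divide_distrib)

lemma ME_sum: "markov_expect \<Sigma> \<mu> P N (\<lambda>w. \<Sum>i\<in>I. f i w) = (\<Sum>i\<in>I. markov_expect \<Sigma> \<mu> P N (f i))"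
  unfolding markov_expect_def by (simp add: sum_distrib_left sum.swap[where A=I])

lemma ME_mono:
  assumes "\<And>x. x \<in> \<Sigma> \<Longrightarrow> \<mu> x \<ge> 0" "\<And>x y. x \<in> \<Sigma> \<Longrightarrow> y \<in> \<Sigma> \<Longrightarrow> P x y \<ge> 0"
    and "\<And>w. w \<in> PiE {0..N} (\<lambda>_. \<Sigma>) \<Longrightarrow> f w \<le> g w"
  shows "markov_expect \<Sigma> \<mu> P N f \<le> markov_expect \<Sigma> \<mu> P N g"
  unfolding markov_expect_def
proof (rule sum_mono)
  fix w assume w: "w \<in> PiE {0..N} (\<lambda>_. \<Sigma>)"
  have "\<mu> (w 0) \<ge> 0" using w assms(1) by (auto simp: PiE_def Pi_def)
  moreover have "(\<Prod>i\<in>{1..N}. P (w (i - 1)) (w i)) \<ge> 0"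
    using w assms(2) by (intro prod_nonneg) (auto simp: PiE_def Pi_def)
  ultimately show "\<mu> (w 0) * (\<Prod>i\<in>{1..N}. P (w (i - 1)) (w i)) * f w \<le>
      \<mu> (w 0) * (\<Prod>i\<in>{1..N}. P (w (i - 1)) (w i)) * g w"
    using assms(3)[OF w] by (intro mult_left_mono) auto
qed

lemma ME_zero:
  "markov_expect \<Sigma> \<mu> P 0 f = (\<Sum>y\<in>\<Sigma>. \<mu> y * f (fun_upd (\<lambda>_. undefined) 0 y))"
proof -
  have e: "PiE {0..0::nat} (\<lambda>_. \<Sigma>) = (\<lambda>(y, g). g(0 := y)) ` (\<Sigma> \<times> PiE {} (\<lambda>_. \<Sigma>))"
    by (subst atLeastAtMost_singleton) (rule PiE_insert_eq)
  have inj: "inj_on (\<lambda>(y, g). g((0::nat) := y)) (\<Sigma> \<times> PiE {} (\<lambda>_. \<Sigma>))"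
    using inj_combinator[of 0 "{}" "\<lambda>_. \<Sigma>"] by simp
  show ?thesis
  proof -
    have e2: "\<Sigma> \<times> PiE {} (\<lambda>_. \<Sigma>) = (\<lambda>y. (y, \<lambda>_. undefined)) ` \<Sigma>" by auto
    have inj2: "inj_on (\<lambda>y. (y, \<lambda>_::nat. undefined)) \<Sigma>" by (auto simp: inj_on_def)
    show ?thesis
      unfolding markov_expect_def
      apply (subst e)
      apply (subst sum.reindex[OF inj])
      apply (subst e2)
      apply (subst sum.reindex[OF inj2])
      apply simp
      done
  qed
qed

lemma ME_peel:
  assumes fin: "finite \<Sigma>"
  shows "markov_expect \<Sigma> \<mu> P (Suc n) f =
    markov_expect \<Sigma> \<mu> P n (\<lambda>w. \<Sum>y\<in>\<Sigma>. P (w n) y * f (w(Suc n := y)))"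
proof -
  have e: "PiE {0..Suc n} (\<lambda>_. \<Sigma>) = (\<lambda>(y, g). g(Suc n := y)) ` (\<Sigma> \<times> PiE {0..n} (\<lambda>_. \<Sigma>))"
    using PiE_insert_eq[of "Suc n" "{0..n}" "\<lambda>_. \<Sigma>"] by (simp add: atLeast0_atMost_Suc)
  have inj: "inj_on (\<lambda>(y, g). g(Suc n := y)) (\<Sigma> \<times> PiE {0..n} (\<lambda>_. \<Sigma>))"
    using inj_combinator[of "Suc n" "{0..n}" "\<lambda>_. \<Sigma>"] by simp
  have pr: "(\<Prod>i\<in>{1..Suc n}. P ((w(Suc n := y)) (i - 1)) ((w(Suc n := y)) i)) =
      (\<Prod>i\<in>{1..n}. P (w (i - 1)) (w i)) * P (w n) y" for w y
  proof -
    have "(\<Prod>i\<in>{1..Suc n}. P ((w(Suc n := y)) (i - 1)) ((w(Suc n := y)) i)) =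
       (\<Prod>i\<in>{1..n}. P ((w(Suc n := y)) (i - 1)) ((w(Suc n := y)) i)) * P (w n) y"
      by (simp add: prod.nat_ivl_Suc')
    also have "(\<Prod>i\<in>{1..n}. P ((w(Suc n := y)) (i - 1)) ((w(Suc n := y)) i)) = (\<Prod>i\<in>{1..n}. P (w (i - 1)) (w i))"
      by (intro prod.cong refl) auto
    finally show ?thesis .
  qed
  have "markov_expect \<Sigma> \<mu> P (Suc n) f =
     (\<Sum>(y, w)\<in>\<Sigma> \<times> PiE {0..n} (\<lambda>_. \<Sigma>). \<mu> (w 0) * ((\<Prod>i\<in>{1..n}. P (w (i - 1)) (w i)) * P (w n) y) * f (w(Suc n := y)))"
    unfolding markov_expect_def e sum.reindex[OF inj] by (simp only: comp_def split_def pr) simp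
  also have "\<dots> = (\<Sum>y\<in>\<Sigma>. \<Sum>w\<in>PiE {0..n} (\<lambda>_. \<Sigma>). \<mu> (w 0) * ((\<Prod>i\<in>{1..n}. P (w (i - 1)) (w i)) * P (w n) y) * f (w(Suc n := y)))"
    by (simp add: sum.cartesian_product)
  also have "\<dots> = markov_expect \<Sigma> \<mu> P n (\<lambda>w. \<Sum>y\<in>\<Sigma>. P (w n) y * f (w(Suc n := y)))"
    unfolding markov_expect_def by (subst sum.swap) (simp add: sum_distrib_left sum_distrib_right mult_ac)
  finally show ?thesis .
qed

locale MC =
  fixes \<Sigma> :: "real set" and \<mu> :: "real \<Rightarrow> real" and P :: "real \<Rightarrow> real \<Rightarrow> real"
  assumes fin: "finite \<Sigma>"
    and rows: "\<And>x. x \<in> \<Sigma> \<Longrightarrow> (\<Sum>y\<in>\<Sigma>. P x y) = 1"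
    and inv: "\<And>y. y \<in> \<Sigma> \<Longrightarrow> (\<Sum>x\<in>\<Sigma>. \<mu> x * P x y) = \<mu> y"
    and mu_nn: "\<And>x. x \<in> \<Sigma> \<Longrightarrow> \<mu> x \<ge> 0"
    and P_nn: "\<And>x y. x \<in> \<Sigma> \<Longrightarrow> y \<in> \<Sigma> \<Longrightarrow> P x y \<ge> 0"
    and mu_sum: "(\<Sum>x\<in>\<Sigma>. \<mu> x) = 1"
begin

abbreviation E where "E N f \<equiv> markov_expect \<Sigma> \<mu> P N f"

lemma E_restrict:
  assumes dep: "\<And>w w'. (\<And>i. i \<le> k \<Longrightarrow> w i = w' i) \<Longrightarrow> f w = f w'"
    and kN: "k \<le> N"
  shows "E N f = E k f"
  using kN
proof (induction N)
  case 0 then show ?case by simp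
next
  case (Suc N)
  show ?case
  proof (cases "k = Suc N")
    case True then show ?thesis by simp
  next
    case False
    then have kN: "k \<le> N" using Suc.prems by simp
    have "E (Suc N) f = E N (\<lambda>w. \<Sum>y\<in>\<Sigma>. P (w N) y * f (w(Suc N := y)))" by (rule ME_peel[OF fin])
    also have "\<dots> = E N f"
    proof (rule ME_cong)
      fix w assume w: "w \<in> PiE {0..N} (\<lambda>_. \<Sigma>)"
      have fy: "f (w(Suc N := y)) = f w" for y by (rule dep) (use kN in auto)
      have "(\<Sum>y\<in>\<Sigma>. P (w N) y * f (w(Suc N := y))) = (\<Sum>y\<in>\<Sigma>. P (w N) y) * f w"
        by (simp only: fy sum_distrib_right)
      also have "\<dots> = f w" using w rows by (auto simp: PiE_def Pi_def)
      finally show "(\<Sum>y\<in>\<Sigma>. P (w N) y * f (w(Suc N := y))) = f w" .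
    qed
    also have "\<dots> = E k f" using Suc.IH kN by simp
    finally show ?thesis .
  qed
qed

lemma E_stat_same: "E n (\<lambda>w. \<psi> (w n)) = (\<Sum>x\<in>\<Sigma>. \<mu> x * \<psi> x)"
proof (induction n arbitrary: \<psi>)
  case 0 then show ?case by (simp add: ME_zero)
next
  case (Suc n)
  have "E (Suc n) (\<lambda>w. \<psi> (w (Suc n))) = E n (\<lambda>w. \<Sum>y\<in>\<Sigma>. P (w n) y * \<psi> y)"
    by (simp add: ME_peel[OF fin])
  also have "\<dots> = (\<Sum>x\<in>\<Sigma>. \<mu> x * (\<Sum>y\<in>\<Sigma>. P x y * \<psi> y))" by (rule Suc.IH)
  also have "\<dots> = (\<Sum>x\<in>\<Sigma>. \<Sum>y\<in>\<Sigma>. \<mu> x * P x y * \<psi> y)"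
    by (simp add: sum_distrib_left mult.assoc)
  also have "\<dots> = (\<Sum>y\<in>\<Sigma>. \<Sum>x\<in>\<Sigma>. \<mu> x * P x y * \<psi> y)"
    by (rule sum.swap)
  also have "\<dots> = (\<Sum>y\<in>\<Sigma>. (\<Sum>x\<in>\<Sigma>. \<mu> x * P x y) * \<psi> y)"
    by (simp add: sum_distrib_right)
  also have "\<dots> = (\<Sum>y\<in>\<Sigma>. \<mu> y * \<psi> y)" using inv by simp
  finally show ?case .
qed

lemma E_stat: "i \<le> N \<Longrightarrow> E N (\<lambda>w. \<psi> (w i)) = (\<Sum>x\<in>\<Sigma>. \<mu> x * \<psi> x)"
  using E_restrict[of i "\<lambda>w. \<psi> (w i)" N] E_stat_same[of i \<psi>] by simp

lemma E_const: "E N (\<lambda>w. c) = c"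
  using E_stat[of 0 N "\<lambda>_. c"] mu_sum by (simp add: sum_distrib_right[symmetric])

lemma E_pair: "Suc j \<le> N \<Longrightarrow> E N (\<lambda>w. \<phi> (w j) (w (Suc j))) = (\<Sum>x\<in>\<Sigma>. \<mu> x * (\<Sum>y\<in>\<Sigma>. P x y * \<phi> x y))"
proof -
  assume jN: "Suc j \<le> N"
  have "E N (\<lambda>w. \<phi> (w j) (w (Suc j))) = E (Suc j) (\<lambda>w. \<phi> (w j) (w (Suc j)))"
    using jN by (intro E_restrict) auto
  also have "\<dots> = E j (\<lambda>w. \<Sum>y\<in>\<Sigma>. P (w j) y * \<phi> (w j) y)"
    by (simp add: ME_peel[OF fin])
  also have "\<dots> = (\<Sum>x\<in>\<Sigma>. \<mu> x * (\<Sum>y\<in>\<Sigma>. P x y * \<phi> x y))" by (rule E_stat_same)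
  finally show ?thesis .
qed

lemma E_mono: "(\<And>w. w \<in> PiE {0..N} (\<lambda>_. \<Sigma>) \<Longrightarrow> f w \<le> g w) \<Longrightarrow> E N f \<le> E N g"
  by (rule ME_mono) (auto intro: mu_nn P_nn)

end

lemma jump_exists:
  fixes v :: "nat \<Rightarrow> real"
  assumes "i \<in> {a+1..c}" "v i \<noteq> v c"
  shows "\<exists>j\<in>{a+1..<c}. v j \<noteq> v (Suc j)"
proof (rule ccontr)
  assume "\<not> ?thesis"
  then have H: "\<And>j. a + 1 \<le> j \<Longrightarrow> j < c \<Longrightarrow> v j = v (Suc j)" by auto
  have "\<And>d. a + 1 \<le> c - d \<Longrightarrow> v (c - d) = v c"
  proof -
    fix d show "a + 1 \<le> c - d \<Longrightarrow> v (c - d) = v c"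
    proof (induction d)
      case 0 then show ?case by simp
    next
      case (Suc d)
      then have "v (c - Suc d) = v (Suc (c - Suc d))" by (intro H) auto
      also have "Suc (c - Suc d) = c - d" using Suc.prems by simp
      finally show ?case using Suc by simp
    qed
  qed
  from this[of "c - i"] assms show False by auto
qed

context Kass
begin

definition Kbar :: "nat \<Rightarrow> real" where "Kbar D = 1 - (\<Sum>g\<in>{1..D}. K g)"

lemma Kbar_nn: "Kbar D \<ge> 0" using Ksum[of D] by (simp add: Kbar_def)

lemma tail_sum: "(\<Sum>g\<in>{1..c}. if D < g then K g else 0) \<le> Kbar D"
proof -
  define m where "m = max c D"
  have "(\<Sum>g\<in>{1..c}. if D < g then K g else 0) \<le> (\<Sum>g\<in>{1..m}. if D < g then K g else 0)"
    unfolding m_def by (intro sum_mono2) (auto intro: Knn)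
  also have "\<dots> = (\<Sum>g\<in>{1..m} \<inter> {g. D < g}. K g)"
    by (simp add: sum.If_cases)
  also have "\<dots> = (\<Sum>g\<in>{1..m}. K g) - (\<Sum>g\<in>{1..m} \<inter> - {g. D < g}. K g)"
    using sum.Int_Diff[of "{1..m}" K "{g. D < g}"] by (simp add: Diff_eq)
  also have "{1..m} \<inter> - {g. D < g} = {1..D}" unfolding m_def by auto
  finally show ?thesis using Ksum[of m] unfolding Kbar_def by simp
qed

definition Jc :: "(nat \<Rightarrow> real) \<Rightarrow> nat \<Rightarrow> nat \<Rightarrow> real" where
  "Jc v D c = (\<Sum>j\<in>{c-D..<c}. if v j = v (Suc j) then 0 else 1)"

lemma Jc_nn: "Jc v D c \<ge> 0" unfolding Jc_def by (intro sum_nonneg) auto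

lemma upper_step:
  assumes Fnn: "\<And>x. hom_F K x \<ge> 0"
    and C: "\<bar>v c\<bar> \<le> C" and c1: "c \<ge> 1"
  shows "(\<Sum>a<c. K (c - a) * exp (v c - (\<Sum>n\<in>{a+1..c}. hom_F K (v n))))
     \<le> 1 + exp C * (Jc v D c + Kbar D)"
proof -
  define F where "F = hom_F K (v c)"
  have pw: "K (c - a) * exp (v c - (\<Sum>n\<in>{a+1..c}. hom_F K (v n))) \<le>
     K (c - a) * exp (v c - F * real (c - a)) + exp C * (Jc v D c * K (c - a) + (if D < c - a then K (c - a) else 0))"
    if a: "a < c" for a
  proof (cases "\<forall>i\<in>{a+1..c}. v i = v c")
    case True
    have "(\<Sum>n\<in>{a+1..c}. hom_F K (v n)) = (\<Sum>n\<in>{a+1..c}. F)"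
    proof (rule sum.cong[OF refl])
      fix n assume "n \<in> {a+1..c}"
      then have "v n = v c" using True by blast
      then show "hom_F K (v n) = F" unfolding F_def by simp
    qed
    also have "\<dots> = real (card {a+1..c}) * F" by (rule sum_constant)
    also have "card {a+1..c} = c - a" using a by simp
    also have "real (c - a) * F = F * real (c - a)" by (rule mult.commute)
    finally have "K (c - a) * exp (v c - (\<Sum>n\<in>{a+1..c}. hom_F K (v n))) = K (c - a) * exp (v c - F * real (c - a))"
      by (simp only:)
    moreover have "0 \<le> exp C * (Jc v D c * K (c - a) + (if D < c - a then K (c - a) else 0))"
      using Jc_nn[of v D c] Knn[of "c-a"] by (intro mult_nonneg_nonneg add_nonneg_nonneg) auto
    ultimately show ?thesis by linarith
  next
    case False
    then obtain i where i: "i \<in> {a+1..c}" "v i \<noteq> v c" by auto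
    have "0 \<le> (\<Sum>n\<in>{a+1..c}. hom_F K (v n))" using Fnn by (intro sum_nonneg) auto
    then have "exp (v c - (\<Sum>n\<in>{a+1..c}. hom_F K (v n))) \<le> exp C" using C by simp
    then have "K (c - a) * exp (v c - (\<Sum>n\<in>{a+1..c}. hom_F K (v n))) \<le> K (c - a) * exp C"
      using Knn[of "c-a"] by (rule mult_left_mono)
    also have "\<dots> \<le> exp C * (Jc v D c * K (c - a) + (if D < c - a then K (c - a) else 0))"
    proof (cases "D < c - a")
      case True
      have "K (c - a) \<le> Jc v D c * K (c - a) + K (c - a)" using Jc_nn[of v D c] Knn[of "c-a"] by simp
      then have "exp C * K (c - a) \<le> exp C * (Jc v D c * K (c - a) + K (c - a))" by simp
      then show ?thesis using True by (simp only: mult.commute[of "K (c - a)"] if_True)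
    next
      case False
      obtain j where j: "j \<in> {a+1..<c}" "v j \<noteq> v (Suc j)" using jump_exists[OF i] by blast
      have "j \<in> {c-D..<c}" using j False by auto
      then have "(if v j = v (Suc j) then 0 else 1) \<le> Jc v D c"
        unfolding Jc_def by (intro member_le_sum[where f="\<lambda>j. if v j = v (Suc j) then 0 else (1::real)"]) auto
      then have "Jc v D c \<ge> 1" using j by simp
      then have "1 * K (c - a) \<le> Jc v D c * K (c - a)" using Knn[of "c-a"] by (intro mult_right_mono)
      then have "K (c - a) \<le> Jc v D c * K (c - a)" by simp
      then have "exp C * K (c - a) \<le> exp C * (Jc v D c * K (c - a) + 0)" by simp
      then show ?thesis using False by (simp only: mult.commute[of "K (c - a)"] if_False)
    qed
    moreover have "0 \<le> K (c - a) * exp (v c - F * real (c - a))" using Knn[of "c-a"] by simp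
    ultimately show ?thesis by linarith
  qed
  have s1: "(\<Sum>a<c. K (c - a) * exp (v c - (\<Sum>n\<in>{a+1..c}. hom_F K (v n)))) \<le>
     (\<Sum>a<c. K (c - a) * exp (v c - F * real (c - a))) + exp C * (Jc v D c * (\<Sum>a<c. K (c - a)) + (\<Sum>a<c. if D < c - a then K (c - a) else 0))"
  proof -
    have "(\<Sum>a<c. K (c - a) * exp (v c - (\<Sum>n\<in>{a+1..c}. hom_F K (v n)))) \<le>
      (\<Sum>a<c. K (c - a) * exp (v c - F * real (c - a)) + exp C * (Jc v D c * K (c - a) + (if D < c - a then K (c - a) else 0)))"
      by (rule sum_mono) (rule pw, simp)
    also have "\<dots> = (\<Sum>a<c. K (c - a) * exp (v c - F * real (c - a))) + exp C * (Jc v D c * (\<Sum>a<c. K (c - a)) + (\<Sum>a<c. if D < c - a then K (c - a) else 0))"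
      by (simp only: sum.distrib sum_distrib_left[symmetric])
    finally show ?thesis .
  qed
  have e1: "(\<Sum>a<c. K (c - a) * exp (v c - F * real (c - a))) = (\<Sum>g\<in>{1..c}. K g * exp (v c - F * real g))"
    by (rule sum_rev1[where f="\<lambda>g. K g * exp (v c - F * real g)"])
  have e2: "(\<Sum>a<c. K (c - a)) = (\<Sum>g\<in>{1..c}. K g)" by (rule sum_rev1)
  have e3: "(\<Sum>a<c. if D < c - a then K (c - a) else 0) = (\<Sum>g\<in>{1..c}. if D < g then K g else 0)"
    by (rule sum_rev1[where f="\<lambda>g. if D < g then K g else 0"])
  have b1: "(\<Sum>g\<in>{1..c}. K g * exp (v c - F * real g)) \<le> 1" unfolding F_def by (rule F_tilt)
  have b2: "Jc v D c * (\<Sum>g\<in>{1..c}. K g) \<le> Jc v D c" using Ksum Jc_nn by (simp add: mult_left_le)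
  have b3: "(\<Sum>g\<in>{1..c}. if D < g then K g else 0) \<le> Kbar D" by (rule tail_sum)
  have "exp C * (Jc v D c * (\<Sum>g\<in>{1..c}. K g) + (\<Sum>g\<in>{1..c}. if D < g then K g else 0)) \<le> exp C * (Jc v D c + Kbar D)"
    using b2 b3 by (intro mult_left_mono) auto
  moreover have "(\<Sum>a<c. K (c - a) * exp (v c - (\<Sum>n\<in>{a+1..c}. hom_F K (v n)))) \<le>
     (\<Sum>g\<in>{1..c}. K g * exp (v c - F * real g)) + exp C * (Jc v D c * (\<Sum>g\<in>{1..c}. K g) + (\<Sum>g\<in>{1..c}. if D < g then K g else 0))"
    using s1 unfolding e1 e2 e3 .
  ultimately show ?thesis using b1 by linarith
qed


lemma Wf_pos: "Wf K v a k > 0"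
proof -
  have "(\<Prod>i\<in>{1..k}. K 1 * exp (v (a+i))) > 0" using K1 by (intro prod_pos) auto
  then show ?thesis using Wf_lower[where K=K, OF Knn, of v a k] by linarith
qed

lemma upper_path:
  assumes Fnn: "\<And>x. hom_F K x \<ge> 0"
    and Cb: "\<And>n. 1 \<le> n \<Longrightarrow> n \<le> N \<Longrightarrow> \<bar>v n\<bar> \<le> C"
  shows "ln (Wf K v 0 N) \<le> (\<Sum>n\<in>{1..N}. hom_F K (v n)) + exp C * (\<Sum>n\<in>{1..N}. Jc v D n + Kbar D)"
proof -
  define S where "S c = (\<Sum>n\<in>{1..c}. hom_F K (v n))" for c
  define x where "x n = exp C * (Jc v D n + Kbar D)" for n
  define Pp where "Pp c = (\<Prod>n\<in>{1..c}. 1 + x n)" for c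
  have xnn: "x n \<ge> 0" for n unfolding x_def using Jc_nn[of v D n] Kbar_nn[of D] by simp
  have PpSuc: "Pp (Suc c) = (1 + x (Suc c)) * Pp c" for c unfolding Pp_def by (simp add: prod.nat_ivl_Suc')
  have Pppos: "Pp c > 0" for c unfolding Pp_def using xnn by (intro prod_pos) (auto intro: add_pos_nonneg)
  have Ppmono: "Pp a \<le> Pp b" if "a \<le> b" for a b
  proof (rule lift_Suc_mono_le[of Pp, OF _ that])
    fix n
    have "1 * Pp n \<le> (1 + x (Suc n)) * Pp n" using Pppos[of n] xnn[of "Suc n"] by (intro mult_right_mono) auto
    then show "Pp n \<le> Pp (Suc n)" using PpSuc by simp
  qed
  have Ssplit: "S c = S a + (\<Sum>n\<in>{a+1..c}. hom_F K (v n))" if "a < c" for a c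
  proof -
    have "{1..c} = {1..a} \<union> {a+1..c}" using that by auto
    then show ?thesis unfolding S_def by (simp add: sum.union_disjoint)
  qed
  have main: "c \<le> N \<Longrightarrow> Wf K v 0 c \<le> exp (S c) * Pp c" for c
  proof (induction c rule: less_induct)
    case (less c)
    show ?case
    proof (cases "c = 0")
      case True then show ?thesis by (simp add: Wf.simps S_def Pp_def)
    next
      case False
      then have c1: "c \<ge> 1" by simp
      have "Wf K v 0 c = exp (v c) * (\<Sum>a<c. Wf K v 0 a * K (c - a))"
        using False by (subst Wf.simps) simp
      also have "\<dots> \<le> exp (v c) * (\<Sum>a<c. (exp (S a) * Pp (c - 1)) * K (c - a))"
      proof -
        have "Wf K v 0 a * K (c - a) \<le> (exp (S a) * Pp (c - 1)) * K (c - a)" if a: "a \<in> {..<c}" for a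
        proof -
          have "Wf K v 0 a \<le> exp (S a) * Pp a" using less.IH[of a] a less.prems by simp
          also have "\<dots> \<le> exp (S a) * Pp (c - 1)" using a by (intro mult_left_mono Ppmono) auto
          finally show ?thesis using Knn[of "c - a"] by (rule mult_right_mono)
        qed
        then show ?thesis by (intro mult_left_mono sum_mono) auto
      qed
      also have "\<dots> = Pp (c - 1) * exp (S c) * (\<Sum>a<c. K (c - a) * exp (v c - (\<Sum>n\<in>{a+1..c}. hom_F K (v n))))"
      proof -
        have "exp (v c) * (exp (S a) * Pp (c - 1) * K (c - a)) =
          Pp (c - 1) * exp (S c) * (K (c - a) * exp (v c - (\<Sum>n\<in>{a+1..c}. hom_F K (v n))))" if a: "a \<in> {..<c}" for a
        proof -
          have "exp (S c) * exp (v c - (\<Sum>n\<in>{a+1..c}. hom_F K (v n))) = exp (v c) * exp (S a)"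
            using Ssplit[of a c] a by (simp add: exp_add[symmetric])
          then show ?thesis by (simp add: mult_ac)
        qed
        then have "(\<Sum>a<c. exp (v c) * (exp (S a) * Pp (c - 1) * K (c - a))) =
          (\<Sum>a<c. Pp (c - 1) * exp (S c) * (K (c - a) * exp (v c - (\<Sum>n\<in>{a+1..c}. hom_F K (v n)))))"
          by (rule sum.cong[OF refl])
        then show ?thesis by (simp only: sum_distrib_left)
      qed
      also have "\<dots> \<le> Pp (c - 1) * exp (S c) * (1 + exp C * (Jc v D c + Kbar D))"
        using upper_step[where v=v and c=c and C=C and D=D, OF Fnn Cb[OF c1 less.prems] c1] Pppos[of "c-1"]
        by (intro mult_left_mono) auto
      also have "\<dots> = exp (S c) * Pp c"
        using PpSuc[of "c - 1"] c1 unfolding x_def by (simp add: mult_ac)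
      finally show ?thesis .
    qed
  qed
  have "ln (Wf K v 0 N) \<le> ln (exp (S N) * Pp N)"
    using main[of N] Wf_pos[of v 0 N] by (intro ln_mono) auto
  also have "\<dots> = S N + (\<Sum>n\<in>{1..N}. ln (1 + x n))"
    using Pppos[of N] xnn unfolding Pp_def by (simp add: ln_mult ln_prod add_pos_nonneg[of 1] less_imp_neq[symmetric])
  also have "\<dots> \<le> S N + (\<Sum>n\<in>{1..N}. x n)"
    using xnn by (intro add_left_mono sum_mono ln_add_one_self_le_self) auto
  also have "\<dots> = (\<Sum>n\<in>{1..N}. hom_F K (v n)) + exp C * (\<Sum>n\<in>{1..N}. Jc v D n + Kbar D)"
    unfolding S_def x_def by (simp add: sum_distrib_left)
  finally show ?thesis .
qed

end

context Kass
begin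

lemma block_lower:
  assumes "\<And>i. 1 \<le> i \<Longrightarrow> i \<le> k \<Longrightarrow> \<bar>v (a+i)\<bar> \<le> C"
  shows "ln (Wf K v a k) \<ge> - (real k * (\<bar>ln (K 1)\<bar> + C))"
proof -
  have pos: "\<And>i. K 1 * exp (v (a+i)) > 0" using K1 by simp
  have "ln (\<Prod>i\<in>{1..k}. K 1 * exp (v (a+i))) \<le> ln (Wf K v a k)"
    using Wf_lower[where K=K, OF Knn, of v a k] pos by (intro ln_mono) (auto intro: prod_pos)
  moreover have "ln (\<Prod>i\<in>{1..k}. K 1 * exp (v (a+i))) = (\<Sum>i\<in>{1..k}. ln (K 1) + v (a+i))"
    using pos K1 by (simp add: ln_prod ln_mult less_imp_neq[symmetric])
  moreover have "(\<Sum>i\<in>{1..k}. ln (K 1) + v (a+i)) \<ge> (\<Sum>i\<in>{1..k}. - (\<bar>ln (K 1)\<bar> + C))"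
  proof (rule sum_mono)
    fix i assume "i \<in> {1..k}"
    then have "\<bar>v (a+i)\<bar> \<le> C" using assms by auto
    then show "- (\<bar>ln (K 1)\<bar> + C) \<le> ln (K 1) + v (a+i)" by linarith
  qed
  moreover have "(\<Sum>i\<in>{1..k}. - (\<bar>ln (K 1)\<bar> + C)) = - (real k * (\<bar>ln (K 1)\<bar> + C))" by (simp add: algebra_simps)
  ultimately show ?thesis by linarith
qed

lemma Wf_blocks: "Wf K v 0 (q * l) \<ge> (\<Prod>b<q. Wf K v (b * l) l)"
proof (induction q)
  case 0 then show ?case by (simp add: Wf.simps)
next
  case (Suc q)
  have "(\<Prod>b<Suc q. Wf K v (b * l) l) = (\<Prod>b<q. Wf K v (b * l) l) * Wf K v (q * l) l" by simp
  also have "\<dots> \<le> Wf K v 0 (q * l) * Wf K v (q * l) l"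
    using Suc Wf_pos by (intro mult_right_mono) (auto intro: less_imp_le)
  also have "\<dots> \<le> Wf K v 0 (q * l + l)" using Wf_supermult[where K=K, OF Knn, of v 0 "q*l" l] by simp
  finally show ?case by (simp add: add.commute)
qed

lemma lower_path:
  assumes l1: "l \<ge> 1"
    and Cb: "\<And>n. 1 \<le> n \<Longrightarrow> n \<le> N \<Longrightarrow> \<bar>v n\<bar> \<le> C"
    and Bb: "\<And>n. 1 \<le> n \<Longrightarrow> n \<le> N \<Longrightarrow> ln (zz K (v n) l) \<le> B"
    and C0: "C \<ge> 0"
  shows "ln (Wf K v 0 N) \<ge> (\<Sum>b<N div l. ln (zz K (v (b*l+1)) l)
           - (B + l * (\<bar>ln (K 1)\<bar> + C)) * (\<Sum>i\<in>{b*l+1..<b*l+l}. if v i = v (Suc i) then 0 else 1))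
           - l * (\<bar>ln (K 1)\<bar> + C)"
proof -
  define q where "q = N div l"
  define r where "r = N mod l"
  define C1 where "C1 = \<bar>ln (K 1)\<bar> + C"
  have C1nn: "C1 \<ge> 0" unfolding C1_def using C0 by simp
  have Nqr: "N = q * l + r" unfolding q_def r_def by simp
  have rl: "r < l" unfolding r_def using l1 by simp
  have t1: "Wf K v 0 N \<ge> Wf K v 0 (q*l) * Wf K v (q*l) r"
    using Wf_supermult[where K=K, OF Knn, of v 0 "q*l" r] Nqr by simp
  have t2: "Wf K v 0 (q*l) * Wf K v (q*l) r \<ge> (\<Prod>b<q. Wf K v (b * l) l) * Wf K v (q*l) r"
    using Wf_blocks Wf_pos by (intro mult_right_mono) (auto intro: less_imp_le)
  have t3: "(\<Prod>b<q. Wf K v (b * l) l) * Wf K v (q*l) r > 0"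
    using Wf_pos by (intro mult_pos_pos prod_pos) auto
  have "ln (Wf K v 0 N) \<ge> ln ((\<Prod>b<q. Wf K v (b * l) l) * Wf K v (q*l) r)"
    using t1 t2 t3 by (intro ln_mono) auto
  also have "ln ((\<Prod>b<q. Wf K v (b * l) l) * Wf K v (q*l) r) = (\<Sum>b<q. ln (Wf K v (b * l) l)) + ln (Wf K v (q*l) r)"
    using Wf_pos by (simp add: ln_mult ln_prod less_imp_neq[symmetric] prod_pos)
  finally have s: "ln (Wf K v 0 N) \<ge> (\<Sum>b<q. ln (Wf K v (b * l) l)) + ln (Wf K v (q*l) r)" .
  have rem: "ln (Wf K v (q*l) r) \<ge> - (l * C1)"
  proof -
    have "ln (Wf K v (q*l) r) \<ge> - (real r * C1)" unfolding C1_def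
      using Cb Nqr by (intro block_lower) auto
    moreover have "real r * C1 \<le> real l * C1" using rl C1nn by (intro mult_right_mono) auto
    ultimately show ?thesis by linarith
  qed
  have blk: "ln (Wf K v (b * l) l) \<ge> ln (zz K (v (b*l+1)) l)
           - (B + l * C1) * (\<Sum>i\<in>{b*l+1..<b*l+l}. if v i = v (Suc i) then 0 else 1)" if b: "b < q" for b
  proof -
    have bl: "b * l + l \<le> N"
    proof -
      have "Suc b \<le> q" using b by simp
      then have "Suc b * l \<le> q * l" by (rule mult_right_mono) simp
      then show ?thesis using Nqr by simp
    qed
    define J where "J = (\<Sum>i\<in>{b*l+1..<b*l+l}. if v i = v (Suc i) then 0 else (1::real))"
    show ?thesis
    proof (cases "J = 0")
      case True
      have nj: "\<And>j. j \<in> {b*l+1..<b*l+l} \<Longrightarrow> v j = v (Suc j)"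
      proof (rule ccontr)
        fix j assume j: "j \<in> {b*l+1..<b*l+l}" "v j \<noteq> v (Suc j)"
        then have "(if v j = v (Suc j) then 0 else (1::real)) \<le> J"
          unfolding J_def by (intro member_le_sum[where f="\<lambda>i. if v i = v (Suc i) then 0 else (1::real)"]) auto
        then show False using True j by simp
      qed
      have const: "v i = v (b*l+l)" if "i \<in> {b*l+1..b*l+l}" for i
        using jump_exists[of i "b*l" "b*l+l" v] nj that by (auto simp del: One_nat_def)
      have "Wf K v (b*l) l = Wf K (\<lambda>_. v (b*l+1)) 0 l"
      proof (rule Wf_cong)
        fix i assume "1 \<le> i" "i \<le> l"
        then show "v (b * l + i) = v (b*l+1)" using const[of "b*l+i"] const[of "b*l+1"] l1 by simp
      qed
      then have "ln (Wf K v (b * l) l) = ln (zz K (v (b*l+1)) l)" unfolding zz_def by simp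
      then show ?thesis using True unfolding J_def by simp
    next
      case False
      have "\<not> (\<forall>j\<in>{b*l+1..<b*l+l}. v j = v (Suc j))"
      proof
        assume all: "\<forall>j\<in>{b*l+1..<b*l+l}. v j = v (Suc j)"
        have "J = 0" unfolding J_def by (rule sum.neutral) (use all in auto)
        then show False using False by simp
      qed
      then obtain j where j: "j \<in> {b*l+1..<b*l+l}" "v j \<noteq> v (Suc j)" by blast
      then have "(if v j = v (Suc j) then 0 else (1::real)) \<le> J"
        unfolding J_def by (intro member_le_sum[where f="\<lambda>i. if v i = v (Suc i) then 0 else (1::real)"]) auto
      then have J1: "J \<ge> 1" using j by simp
      have G1: "ln (zz K (v (b*l+1)) l) \<le> B" using Bb bl l1 by auto
      have G2: "ln (Wf K v (b * l) l) \<ge> - (l * C1)"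
        unfolding C1_def using Cb bl by (intro block_lower) auto
      have G3: "ln (zz K (v (b*l+1)) l) \<ge> - (l * C1)"
        unfolding zz_def C1_def using Cb[of "b*l+1"] bl l1 by (intro block_lower) auto
      have nn: "B + l * C1 \<ge> 0" using G1 G3 by linarith
      have "(B + l * C1) * 1 \<le> (B + l * C1) * J" by (rule mult_left_mono[OF J1 nn])
      then have "B + l * C1 \<le> (B + l * C1) * J" by simp
      then show ?thesis unfolding J_def[symmetric] using G1 G2 by linarith
    qed
  qed
  have "(\<Sum>b<q. ln (Wf K v (b * l) l)) \<ge> (\<Sum>b<q. ln (zz K (v (b*l+1)) l)
           - (B + l * C1) * (\<Sum>i\<in>{b*l+1..<b*l+l}. if v i = v (Suc i) then 0 else 1))"
    using blk by (intro sum_mono) auto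
  then show ?thesis using s rem unfolding q_def[symmetric] C1_def[symmetric] by linarith
qed

end

locale Setup =
  fixes K :: "nat \<Rightarrow> real" and L :: "real \<Rightarrow> real" and \<alpha> :: real
    and \<Sigma> :: "real set" and Q :: "real \<Rightarrow> real \<Rightarrow> real" and \<mu> :: "real \<Rightarrow> real"
    and \<gamma> \<beta> h :: real
  assumes a_nn: "\<alpha> \<ge> 0" and sv: "slowly_varying L"
    and K0: "K 0 = 0" and KL: "\<And>n. n \<ge> 1 \<Longrightarrow> K n = L (real n) * real n powr (-(1 + \<alpha>))"
    and Ks: "K sums 1"
    and finS: "finite \<Sigma>" and neS: "\<Sigma> \<noteq> {}"
    and stoch: "stochastic_matrix \<Sigma> Q" and irr: "irreducible_matrix \<Sigma> Q"
    and invd: "invariant_distribution \<Sigma> Q \<mu>"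
    and g0: "0 < \<gamma>" and g1: "\<gamma> < 1" and b0: "\<beta> \<ge> 0"
begin

lemma Lpos: "x > 0 \<Longrightarrow> L x > 0" using sv unfolding slowly_varying_def by auto

lemma Knn': "K n \<ge> 0"
proof (cases "n = 0")
  case True then show ?thesis using K0 by simp
next
  case False then show ?thesis using KL[of n] Lpos[of "real n"] by simp
qed

lemma K1': "K 1 > 0" using KL[of 1] Lpos[of 1] by simp

lemma Ksum': "(\<Sum>g\<in>{1..n}. K g) \<le> 1"
proof -
  have "(\<Sum>g<Suc n. K g) \<le> 1"
    using sum_le_suminf[of K "{..<Suc n}"] Ks Knn' by (auto simp: sums_iff)
  moreover have "(\<Sum>g<Suc n. K g) = K 0 + (\<Sum>g\<in>{1..n}. K g)"
    by (induction n) (simp_all add: sum.nat_ivl_Suc')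
  ultimately show ?thesis using K0 by simp
qed

sublocale Kass K using Knn' K1' Ksum' by unfold_locales auto

lemma Hsub: "\<epsilon> > 0 \<Longrightarrow> \<exists>n\<ge>M. n \<ge> 1 \<and> K n > 0 \<and> ln (K n) \<ge> - \<epsilon> * n"
proof -
  assume e: "\<epsilon> > 0"
  have "((\<lambda>x. L (2 * x) / L x) \<longlongrightarrow> 1) at_top" using sv unfolding slowly_varying_def by auto
  then have "eventually (\<lambda>x. 1/2 < L (2 * x) / L x) at_top" by (rule order_tendstoD) simp
  then obtain X where X: "\<And>x. x \<ge> X \<Longrightarrow> 1/2 < L (2 * x) / L x" unfolding eventually_at_top_linorder by auto
  define n0 where "n0 = max 1 (nat \<lceil>X\<rceil>)"
  have n01: "n0 \<ge> 1" unfolding n0_def by simp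
  have n0X: "real n0 \<ge> X" unfolding n0_def by linarith
  define m where "m k = 2^k * n0" for k :: nat
  have mge: "m k \<ge> n0" for k unfolding m_def by simp
  have mL: "L (real (m k)) \<ge> L (real n0) / 2^k" for k
  proof (induction k)
    case 0 then show ?case by (simp add: m_def)
  next
    case (Suc k)
    have mX: "real (m k) \<ge> X" using mge[of k] n0X by linarith
    have mpos: "real (m k) > 0" using mge[of k] n01 by simp
    have "L (real (m k)) / 2 < L (2 * real (m k))"
      using X[OF mX] Lpos[OF mpos] by (simp add: field_simps)
    moreover have "real (m (Suc k)) = 2 * real (m k)" unfolding m_def by simp
    ultimately have "L (real (m (Suc k))) \<ge> L (real (m k)) / 2" by simp
    moreover have "L (real (m k)) / 2 \<ge> L (real n0) / 2^(Suc k)" using Suc by (simp add: field_simps)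
    ultimately show ?case by linarith
  qed
  define c0 where "c0 = ln (L (real n0))"
  have Kbound: "ln (K (m k)) \<ge> c0 - (2 + \<alpha>) * ln (real (m k))" for k
  proof -
    have mpos: "real (m k) > 0" using mge[of k] n01 by simp
    have m1: "m k \<ge> 1" using mge[of k] n01 by simp
    have L0: "L (real n0) > 0" using Lpos n01 by simp
    have "ln (K (m k)) = ln (L (real (m k))) - (1 + \<alpha>) * ln (real (m k))"
      using KL[OF m1] Lpos[OF mpos] mpos by (simp add: ln_mult ln_powr algebra_simps)
    moreover have "ln (L (real (m k))) \<ge> ln (L (real n0) / 2^k)"
      using mL[of k] L0 by (intro ln_mono) auto
    moreover have "ln (L (real n0) / 2^k) = c0 - k * ln 2"
      unfolding c0_def using L0 by (simp add: ln_div ln_realpow)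
    moreover have "k * ln 2 \<le> ln (real (m k))"
    proof -
      have "real k * ln 2 = ln (2^k)" by (simp add: ln_realpow)
      also have "\<dots> \<le> ln (real (m k))" unfolding m_def using n01 by (intro ln_mono) auto
      finally show ?thesis .
    qed
    ultimately show ?thesis by (simp add: algebra_simps)
  qed
  define d where "d = \<epsilon> / (2 * (2 + \<alpha>))"
  have dpos: "d > 0" unfolding d_def using e a_nn by simp
  have ev1: "eventually (\<lambda>x::real. ln x / x < d) at_top"
    using order_tendstoD(2)[OF ln_x_over_x_tendsto_0 dpos] .
  have ev2: "eventually (\<lambda>x::real. \<bar>c0\<bar> / x < \<epsilon> / 2) at_top"
  proof -
    have "((\<lambda>x::real. \<bar>c0\<bar> / x) \<longlongrightarrow> 0) at_top" by (intro tendsto_divide_0[OF tendsto_const] filterlim_at_top_imp_at_infinity filterlim_ident)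
    then show ?thesis using e by (intro order_tendstoD(2)) auto
  qed
  from eventually_conj[OF eventually_conj[OF ev1 ev2] eventually_ge_at_top[of 1]]
  obtain X2 where X2: "\<And>x. x \<ge> X2 \<Longrightarrow> ln x / x < d \<and> \<bar>c0\<bar> / x < \<epsilon> / 2 \<and> x \<ge> 1"
    unfolding eventually_at_top_linorder by auto
  define k where "k = max M (nat \<lceil>X2\<rceil>)"
  have mk: "m k \<ge> k" unfolding m_def using n01 less_exp[of k]
    by (metis le_trans less_imp_le mult_le_mono1 mult_1_right mult.commute nat_mult_1_right order_refl)
  have mkM: "m k \<ge> M" using mk unfolding k_def by simp
  have mkX: "real (m k) \<ge> X2"
  proof -
    have "real k \<ge> X2" unfolding k_def by linarith
    then show ?thesis using mk by linarith
  qed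
  define x where "x = real (m k)"
  have xp: "x \<ge> 1" using X2[OF mkX] x_def by simp
  have h1: "ln x < d * x" using X2[OF mkX] xp unfolding x_def[symmetric] by (simp add: divide_less_eq)
  have h2: "\<bar>c0\<bar> < \<epsilon> / 2 * x" using X2[OF mkX] xp unfolding x_def[symmetric] by (simp add: divide_less_eq)
  have "(2 + \<alpha>) * ln x \<le> (2 + \<alpha>) * (d * x)" using h1 a_nn by (intro mult_left_mono) auto
  also have "(2 + \<alpha>) * (d * x) = \<epsilon> / 2 * x" unfolding d_def using a_nn by (simp add: field_simps)
  finally have h3: "(2 + \<alpha>) * ln x \<le> \<epsilon> / 2 * x" .
  have "ln (K (m k)) \<ge> - \<epsilon> * real (m k)"
    using Kbound[of k] h2 h3 unfolding x_def by (simp add: algebra_simps)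
  moreover have "K (m k) > 0" using KL[of "m k"] Lpos[of "real (m k)"] mge[of k] n01 by simp
  moreover have "m k \<ge> 1" using mge[of k] n01 by simp
  ultimately show ?thesis using mkM by blast
qed

lemma Fnn: "hom_F K c \<ge> 0"
  by (rule F_nonneg) (rule Hsub)

end

context Setup
begin

definition tN :: "nat \<Rightarrow> real" where "tN N = real N powr (-\<gamma>)"

lemma tN_pos: "N \<ge> 1 \<Longrightarrow> tN N > 0" unfolding tN_def by simp

lemma tN_le1: "N \<ge> 1 \<Longrightarrow> tN N \<le> 1"
  unfolding tN_def using g0 by (simp add: powr_minus divide_simps ge_one_powr_ge_zero)

lemma Q_nn: "x \<in> \<Sigma> \<Longrightarrow> y \<in> \<Sigma> \<Longrightarrow> Q x y \<ge> 0" using stoch unfolding stochastic_matrix_def by auto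
lemma Q_rows: "x \<in> \<Sigma> \<Longrightarrow> (\<Sum>y\<in>\<Sigma>. Q x y) = 1" using stoch unfolding stochastic_matrix_def by auto
lemma mu_nn': "x \<in> \<Sigma> \<Longrightarrow> \<mu> x \<ge> 0" using invd unfolding invariant_distribution_def by auto
lemma mu_sum': "(\<Sum>x\<in>\<Sigma>. \<mu> x) = 1" using invd unfolding invariant_distribution_def by auto
lemma mu_inv: "y \<in> \<Sigma> \<Longrightarrow> (\<Sum>x\<in>\<Sigma>. \<mu> x * Q x y) = \<mu> y" using invd unfolding invariant_distribution_def by auto

lemma QN_eq: "QN Q \<gamma> N x y = (if x = y then 1 else 0) + tN N * (Q x y - (if x = y then 1 else 0))"
  unfolding QN_def tN_def by simp

lemma MC_N:
  assumes N1: "N \<ge> 1"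
  shows "MC \<Sigma> \<mu> (QN Q \<gamma> N)"
proof
  show "finite \<Sigma>" by (rule finS)
  fix x assume x: "x \<in> \<Sigma>"
  have "(\<Sum>y\<in>\<Sigma>. QN Q \<gamma> N x y) = (\<Sum>y\<in>\<Sigma>. (if x = y then 1 else 0)) + tN N * ((\<Sum>y\<in>\<Sigma>. Q x y) - (\<Sum>y\<in>\<Sigma>. (if x = y then 1 else 0)))"
    unfolding QN_eq by (simp add: sum.distrib sum_distrib_left sum_subtractf right_diff_distrib)
  also have "(\<Sum>y\<in>\<Sigma>. (if x = y then 1 else (0::real))) = 1" using x finS by simp
  finally show "(\<Sum>y\<in>\<Sigma>. QN Q \<gamma> N x y) = 1" using Q_rows[OF x] by simp
next
  fix y assume y: "y \<in> \<Sigma>"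
  have "(\<Sum>x\<in>\<Sigma>. \<mu> x * QN Q \<gamma> N x y) = (\<Sum>x\<in>\<Sigma>. \<mu> x * (if x = y then 1 else 0)) + tN N * ((\<Sum>x\<in>\<Sigma>. \<mu> x * Q x y) - (\<Sum>x\<in>\<Sigma>. \<mu> x * (if x = y then 1 else 0)))"
    unfolding QN_eq by (simp add: sum.distrib sum_distrib_left sum_subtractf right_diff_distrib distrib_left mult_ac)
  also have "(\<Sum>x\<in>\<Sigma>. \<mu> x * (if x = y then 1 else (0::real))) = \<mu> y" using y finS by (simp add: if_distrib cong: if_cong)
  finally show "(\<Sum>x\<in>\<Sigma>. \<mu> x * QN Q \<gamma> N x y) = \<mu> y" using mu_inv[OF y] by simp
next
  fix x assume "x \<in> \<Sigma>" then show "\<mu> x \<ge> 0" by (rule mu_nn')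
next
  fix x y assume x: "x \<in> \<Sigma>" and y: "y \<in> \<Sigma>"
  show "QN Q \<gamma> N x y \<ge> 0"
  proof (cases "x = y")
    case True
    have "QN Q \<gamma> N x y = (1 - tN N) + tN N * Q x y" unfolding QN_eq using True by (simp add: algebra_simps)
    moreover have "0 \<le> 1 - tN N" using tN_le1[OF N1] by simp
    moreover have "0 \<le> tN N * Q x y" using tN_pos[OF N1] Q_nn[OF x y] by simp
    ultimately show ?thesis by linarith
  next
    case False
    then show ?thesis unfolding QN_eq using tN_pos[OF N1] Q_nn[OF x y] by simp
  qed
next
  show "(\<Sum>x\<in>\<Sigma>. \<mu> x) = 1" by (rule mu_sum')
qed

definition phi :: "real \<Rightarrow> real \<Rightarrow> real" where
  "phi x y = (if \<beta> * x + h = \<beta> * y + h then 0 else 1)"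

lemma jumpE:
  assumes N1: "N \<ge> 1" and jN: "Suc j \<le> N"
  shows "markov_expect \<Sigma> \<mu> (QN Q \<gamma> N) N (\<lambda>w. phi (w j) (w (Suc j))) \<le> tN N"
proof -
  interpret MC \<Sigma> \<mu> "QN Q \<gamma> N" by (rule MC_N[OF N1])
  have "E N (\<lambda>w. phi (w j) (w (Suc j))) = (\<Sum>x\<in>\<Sigma>. \<mu> x * (\<Sum>y\<in>\<Sigma>. QN Q \<gamma> N x y * phi x y))"
    by (rule E_pair[OF jN])
  also have "\<dots> \<le> (\<Sum>x\<in>\<Sigma>. \<mu> x * (\<Sum>y\<in>\<Sigma>. tN N * Q x y))"
  proof (intro sum_mono mult_left_mono mu_nn')
    fix x y assume x: "x \<in> \<Sigma>" and y: "y \<in> \<Sigma>"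
    show "QN Q \<gamma> N x y * phi x y \<le> tN N * Q x y"
    proof (cases "x = y")
      case True then show ?thesis using tN_pos[OF N1] Q_nn[OF x y] by (simp add: phi_def)
    next
      case False then show ?thesis using tN_pos[OF N1] Q_nn[OF x y] by (simp add: phi_def QN_eq)
    qed
  qed auto
  also have "\<dots> = tN N"
  proof -
    have "(\<Sum>x\<in>\<Sigma>. \<mu> x * (\<Sum>y\<in>\<Sigma>. tN N * Q x y)) = (\<Sum>x\<in>\<Sigma>. \<mu> x * tN N)"
      using Q_rows by (simp add: sum_distrib_left[symmetric])
    also have "\<dots> = tN N" using mu_sum' by (simp add: sum_distrib_right[symmetric])
    finally show ?thesis .
  qed
  finally show ?thesis .
qed

end

context Setup
begin

definition M0 where "M0 = Max (abs ` \<Sigma>)"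
definition CC where "CC = \<bar>h\<bar> + \<beta> * M0"
definition C1 where "C1 = \<bar>ln (K 1)\<bar> + CC"
definition Ef where "Ef N = markov_expect \<Sigma> \<mu> (QN Q \<gamma> N) N (\<lambda>\<omega>. ln (Zpart K \<beta> h \<omega> N) / real N)"
definition TT where "TT = (\<Sum>x\<in>\<Sigma>. \<mu> x * hom_F K (h + \<beta> * x))"

lemma vbound: "x \<in> \<Sigma> \<Longrightarrow> \<bar>\<beta> * x + h\<bar> \<le> CC"
proof -
  assume x: "x \<in> \<Sigma>"
  have "\<bar>x\<bar> \<le> M0" unfolding M0_def using x finS by (intro Max_ge) auto
  then have "\<beta> * \<bar>x\<bar> \<le> \<beta> * M0" using b0 by (rule mult_left_mono)
  moreover have "\<bar>\<beta> * x\<bar> = \<beta> * \<bar>x\<bar>" using b0 by (simp add: abs_mult)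
  ultimately show ?thesis unfolding CC_def using abs_triangle_ineq[of "\<beta> * x" h] by linarith
qed

lemma CC_nn: "CC \<ge> 0" using vbound[of "SOME x. x \<in> \<Sigma>"] neS some_in_eq by (metis abs_ge_zero order_trans)

lemma C1_nn: "C1 \<ge> 0" unfolding C1_def using CC_nn by simp

lemma PiE_in: "w \<in> PiE {0..N} (\<lambda>_. \<Sigma>) \<Longrightarrow> (n::nat) \<le> N \<Longrightarrow> w n \<in> \<Sigma>"
  by (auto simp: PiE_def Pi_def)

lemma UB:
  assumes N1: "N \<ge> 1"
  shows "Ef N \<le> TT + exp CC * (real D * tN N + Kbar D)"
proof -
  interpret MC \<Sigma> \<mu> "QN Q \<gamma> N" by (rule MC_N[OF N1])
  define R where "R w = (\<Sum>n\<in>{1..N}. hom_F K (\<beta> * w n + h)) +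
     exp CC * (\<Sum>n\<in>{1..N}. (\<Sum>j\<in>{n-D..<n}. phi (w j) (w (Suc j))) + Kbar D)" for w :: "nat \<Rightarrow> real"
  have pw: "ln (Zpart K \<beta> h w N) \<le> R w" if w: "w \<in> PiE {0..N} (\<lambda>_. \<Sigma>)" for w
  proof -
    have "ln (Zpart K \<beta> h w N) \<le> (\<Sum>n\<in>{1..N}. hom_F K (\<beta> * w n + h)) +
      exp CC * (\<Sum>n\<in>{1..N}. Jc (\<lambda>n. \<beta> * w n + h) D n + Kbar D)"
      unfolding Zpart_Wf
      by (rule upper_path[OF Fnn]) (use vbound PiE_in[OF w] in auto)
    also have "(\<Sum>n\<in>{1..N}. Jc (\<lambda>n. \<beta> * w n + h) D n + Kbar D) =
       (\<Sum>n\<in>{1..N}. (\<Sum>j\<in>{n-D..<n}. phi (w j) (w (Suc j))) + Kbar D)"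
      unfolding Jc_def phi_def by simp
    finally show ?thesis unfolding R_def .
  qed
  have "E N (\<lambda>w. ln (Zpart K \<beta> h w N)) \<le> E N R" by (rule E_mono) (rule pw)
  also have "E N R = (\<Sum>n\<in>{1..N}. E N (\<lambda>w. hom_F K (\<beta> * w n + h))) +
     exp CC * (\<Sum>n\<in>{1..N}. (\<Sum>j\<in>{n-D..<n}. E N (\<lambda>w. phi (w j) (w (Suc j)))) + Kbar D)"
    unfolding R_def by (simp add: ME_add ME_cmult ME_sum E_const)
  also have "\<dots> \<le> (\<Sum>n\<in>{1..N}. TT) + exp CC * (\<Sum>n\<in>{1..N}. real D * tN N + Kbar D)"
  proof -
    have a: "E N (\<lambda>w. hom_F K (\<beta> * w n + h)) = TT" if "n \<in> {1..N}" for n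
      using E_stat[of n N "\<lambda>x. hom_F K (\<beta> * x + h)"] that unfolding TT_def by (simp add: add.commute)
    have b: "(\<Sum>j\<in>{n-D..<n}. E N (\<lambda>w. phi (w j) (w (Suc j)))) \<le> real D * tN N" if n: "n \<in> {1..N}" for n
    proof -
      have "(\<Sum>j\<in>{n-D..<n}. E N (\<lambda>w. phi (w j) (w (Suc j)))) \<le> (\<Sum>j\<in>{n-D..<n}. tN N)"
        using n by (intro sum_mono jumpE[OF N1]) auto
      also have "\<dots> = real (card {n-D..<n}) * tN N" by simp
      also have "\<dots> \<le> real D * tN N" using tN_pos[OF N1] by (intro mult_right_mono) auto
      finally show ?thesis .
    qed
    have "(\<Sum>n\<in>{1..N}. (\<Sum>j\<in>{n-D..<n}. E N (\<lambda>w. phi (w j) (w (Suc j)))) + Kbar D) \<le> (\<Sum>n\<in>{1..N}. real D * tN N + Kbar D)"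
      using b by (intro sum_mono) auto
    then show ?thesis using a by (simp add: mult_left_mono)
  qed
  also have "\<dots> = real N * (TT + exp CC * (real D * tN N + Kbar D))" by (simp add: algebra_simps)
  finally have "E N (\<lambda>w. ln (Zpart K \<beta> h w N)) \<le> real N * (TT + exp CC * (real D * tN N + Kbar D))" .
  then have "E N (\<lambda>w. ln (Zpart K \<beta> h w N)) / real N \<le> TT + exp CC * (real D * tN N + Kbar D)"
    using N1 by (simp add: divide_le_eq mult.commute)
  then show ?thesis unfolding Ef_def ME_divide .
qed

end

context Setup
begin

definition gl where "gl l x = ln (zz K (\<beta> * x + h) l)"
definition Al where "Al l = (\<Sum>x\<in>\<Sigma>. \<mu> x * gl l x)"
definition Bl where "Bl l = Max ((\<lambda>x. \<bar>gl l x\<bar>) ` \<Sigma>)"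

lemma Bl_ge: "x \<in> \<Sigma> \<Longrightarrow> \<bar>gl l x\<bar> \<le> Bl l"
  unfolding Bl_def using finS by (intro Max_ge) auto

lemma Bl_nn: "Bl l \<ge> 0"
  using Bl_ge[of "SOME x. x \<in> \<Sigma>" l] neS some_in_eq by (metis abs_ge_zero order_trans)

lemma qA_bound:
  fixes A :: real and N l q :: nat
  assumes N1: "N \<ge> 1" and l1: "l \<ge> 1" and q: "q = N div l"
  shows "q * A / N \<ge> A / l - \<bar>A\<bar> / N"
proof -
  have e: "N = q * l + N mod l" unfolding q by simp
  have m: "N mod l < l" using l1 by simp
  have re: "real N = real q * l + real (N mod l)" using e by (metis of_nat_add of_nat_mult)
  have lo: "real q * l \<le> N" using re by simp
  have hi: "real N < (real q + 1) * l" using re m by (simp add: algebra_simps)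
  have d: "\<bar>real q * l - N\<bar> \<le> l" using lo hi by (simp add: algebra_simps)
  have Np: "real N > 0" "real l > 0" using N1 l1 by auto
  have "q * A / N - A / l = A * (real q * l - N) / (N * l)" using Np by (simp add: field_simps)
  also have "\<bar>\<dots>\<bar> = \<bar>A\<bar> * \<bar>real q * l - N\<bar> / (N * l)" using Np by (simp add: abs_mult)
  also have "\<dots> \<le> \<bar>A\<bar> * l / (N * l)" using d Np by (intro divide_right_mono mult_left_mono) auto
  also have "\<dots> = \<bar>A\<bar> / N" using Np by simp
  finally show ?thesis unfolding abs_le_iff by linarith
qed

lemma LB:
  assumes N1: "N \<ge> 1" and l1: "l \<ge> 1"
  shows "Ef N \<ge> Al l / l - (\<bar>Al l\<bar> + l * C1) / N - (Bl l + l * C1) * tN N"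
proof -
  interpret MC \<Sigma> \<mu> "QN Q \<gamma> N" by (rule MC_N[OF N1])
  define q where "q = N div l"
  have qlN: "q * l \<le> N" unfolding q_def by (rule div_times_less_eq_dividend)
  define R where "R w = (\<Sum>b<q. gl l (w (b*l+1))
           - (Bl l + l * C1) * (\<Sum>i\<in>{b*l+1..<b*l+l}. phi (w i) (w (Suc i)))) - l * C1" for w :: "nat \<Rightarrow> real"
  have pw: "R w \<le> ln (Zpart K \<beta> h w N)" if w: "w \<in> PiE {0..N} (\<lambda>_. \<Sigma>)" for w
  proof -
    have "ln (Wf K (\<lambda>n. \<beta> * w n + h) 0 N) \<ge> (\<Sum>b<N div l. ln (zz K (\<beta> * w (b*l+1) + h) l)
           - (Bl l + l * (\<bar>ln (K 1)\<bar> + CC)) * (\<Sum>i\<in>{b*l+1..<b*l+l}. if \<beta> * w i + h = \<beta> * w (Suc i) + h then 0 else 1))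
           - l * (\<bar>ln (K 1)\<bar> + CC)"
    proof (rule lower_path[OF l1, where v="\<lambda>n. \<beta> * w n + h"])
      fix n assume "1 \<le> n" "n \<le> N"
      then have wn: "w n \<in> \<Sigma>" using PiE_in[OF w] by auto
      then show "\<bar>\<beta> * w n + h\<bar> \<le> CC" by (rule vbound)
      show "ln (zz K (\<beta> * w n + h) l) \<le> Bl l" using Bl_ge[OF wn, of l] unfolding gl_def by simp
    next
      show "CC \<ge> 0" by (rule CC_nn)
    qed
    then show ?thesis unfolding R_def Zpart_Wf gl_def phi_def C1_def q_def by simp
  qed
  have "E N R \<le> E N (\<lambda>w. ln (Zpart K \<beta> h w N))" by (rule E_mono) (rule pw)
  moreover have "E N R = (\<Sum>b<q. E N (\<lambda>w. gl l (w (b*l+1)))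
           - (Bl l + l * C1) * (\<Sum>i\<in>{b*l+1..<b*l+l}. E N (\<lambda>w. phi (w i) (w (Suc i))))) - l * C1"
    unfolding R_def by (simp add: ME_diff ME_cmult ME_sum E_const)
  moreover have "(\<Sum>b<q. E N (\<lambda>w. gl l (w (b*l+1)))
           - (Bl l + l * C1) * (\<Sum>i\<in>{b*l+1..<b*l+l}. E N (\<lambda>w. phi (w i) (w (Suc i)))))
       \<ge> (\<Sum>b<q. Al l - (Bl l + l * C1) * (l * tN N))"
  proof (rule sum_mono)
    fix b assume b: "b \<in> {..<q}"
    have bl: "b * l + l \<le> N"
    proof -
      have "Suc b \<le> q" using b by simp
      then have "Suc b * l \<le> q * l" by (rule mult_right_mono) simp
      then show ?thesis using qlN by simp
    qed
    have e1: "E N (\<lambda>w. gl l (w (b*l+1))) = Al l"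
      unfolding Al_def using bl l1 by (intro E_stat) auto
    have "(\<Sum>i\<in>{b*l+1..<b*l+l}. E N (\<lambda>w. phi (w i) (w (Suc i)))) \<le> (\<Sum>i\<in>{b*l+1..<b*l+l}. tN N)"
      using bl by (intro sum_mono jumpE[OF N1]) auto
    also have "\<dots> \<le> l * tN N" using tN_pos[OF N1] by (simp add: mult_right_mono)
    finally have e2: "(\<Sum>i\<in>{b*l+1..<b*l+l}. E N (\<lambda>w. phi (w i) (w (Suc i)))) \<le> l * tN N" .
    have "0 \<le> Bl l + l * C1" using Bl_nn C1_nn by simp
    then have "(Bl l + l * C1) * (\<Sum>i\<in>{b*l+1..<b*l+l}. E N (\<lambda>w. phi (w i) (w (Suc i)))) \<le> (Bl l + l * C1) * (l * tN N)"
      by (rule mult_left_mono[OF e2])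
    then show "Al l - (Bl l + l * C1) * (l * tN N) \<le> E N (\<lambda>w. gl l (w (b*l+1))) -
        (Bl l + l * C1) * (\<Sum>i\<in>{b*l+1..<b*l+l}. E N (\<lambda>w. phi (w i) (w (Suc i))))" using e1 by linarith
  qed
  moreover have "(\<Sum>b<q. Al l - (Bl l + l * C1) * (l * tN N)) = q * Al l - (q * l) * ((Bl l + l * C1) * tN N)"
    by (simp add: algebra_simps)
  moreover have "(q * l) * ((Bl l + l * C1) * tN N) \<le> N * ((Bl l + l * C1) * tN N)"
    using qlN Bl_nn C1_nn tN_pos[OF N1] by (intro mult_right_mono) (auto simp del: of_nat_mult simp: of_nat_mult[symmetric])
  ultimately have "E N (\<lambda>w. ln (Zpart K \<beta> h w N)) \<ge> q * Al l - N * ((Bl l + l * C1) * tN N) - l * C1" by linarith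
  then have "E N (\<lambda>w. ln (Zpart K \<beta> h w N)) / N \<ge> (q * Al l - N * ((Bl l + l * C1) * tN N) - l * C1) / N"
    using N1 by (intro divide_right_mono) auto
  moreover have "(q * Al l - N * ((Bl l + l * C1) * tN N) - l * C1) / N = q * Al l / N - (Bl l + l * C1) * tN N - l * C1 / N"
    using N1 by (simp add: field_simps)
  moreover have "q * Al l / N \<ge> Al l / l - \<bar>Al l\<bar> / N" by (rule qA_bound[OF N1 l1 q_def])
  moreover have "(\<bar>Al l\<bar> + l * C1) / N = \<bar>Al l\<bar> / N + l * C1 / N" by (simp add: add_divide_distrib)
  ultimately show ?thesis unfolding Ef_def ME_divide by linarith
qed

end

context Setup
begin

lemma tN_lim: "tN \<longlonglongrightarrow> 0"
  unfolding tN_def using g0 by (intro tendsto_neg_powr filterlim_real_sequentially) auto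

lemma Kbar_lim: "Kbar \<longlonglongrightarrow> 0"
proof -
  have e: "(\<Sum>g\<in>{1..D}. K g) = (\<Sum>g<Suc D. K g)" for D
    using K0 by (induction D) (simp_all add: sum.nat_ivl_Suc')
  have "(\<lambda>n. \<Sum>i<n. K i) \<longlonglongrightarrow> 1" using Ks by (simp add: sums_def)
  then have "(\<lambda>D. \<Sum>i<Suc D. K i) \<longlonglongrightarrow> 1" by (rule LIMSEQ_Suc)
  then have "(\<lambda>D. 1 - (\<Sum>i<Suc D. K i)) \<longlonglongrightarrow> 1 - 1" by (intro tendsto_diff tendsto_const)
  then show ?thesis unfolding Kbar_def e by simp
qed

lemma Al_lim: "(\<lambda>l. Al l / real l) \<longlonglongrightarrow> TT"
proof -
  have "(\<lambda>l. \<Sum>x\<in>\<Sigma>. \<mu> x * (ln (zz K (\<beta> * x + h) l) / real l)) \<longlonglongrightarrow> (\<Sum>x\<in>\<Sigma>. \<mu> x * hom_F K (\<beta> * x + h))"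
    by (intro tendsto_sum tendsto_mult_left lnzz_props(1))
  moreover have "Al l / real l = (\<Sum>x\<in>\<Sigma>. \<mu> x * (ln (zz K (\<beta> * x + h) l) / real l))" for l
    unfolding Al_def gl_def by (simp add: sum_divide_distrib)
  moreover have "TT = (\<Sum>x\<in>\<Sigma>. \<mu> x * hom_F K (\<beta> * x + h))" unfolding TT_def by (simp add: add.commute)
  ultimately show ?thesis by simp
qed

lemma Ef_lim: "Ef \<longlonglongrightarrow> TT"
proof (rule order_tendstoI)
  fix a assume a: "TT < a"
  define \<epsilon> where "\<epsilon> = a - TT"
  have e: "\<epsilon> > 0" using a \<epsilon>_def by simp
  have lim1: "(\<lambda>D. exp CC * Kbar D) \<longlonglongrightarrow> 0" using tendsto_mult_left[OF Kbar_lim, of "exp CC"] by simp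
  have "eventually (\<lambda>D. exp CC * Kbar D < \<epsilon>/2) sequentially" using e by (intro order_tendstoD(2)[OF lim1]) auto
  then obtain D where D: "exp CC * Kbar D < \<epsilon>/2" by (auto simp: eventually_sequentially)
  have lim2: "(\<lambda>N. exp CC * (real D * tN N)) \<longlonglongrightarrow> 0"
    using tendsto_mult_left[OF tendsto_mult_left[OF tN_lim, of "real D"], of "exp CC"] by simp
  have ev: "eventually (\<lambda>N. exp CC * (real D * tN N) < \<epsilon>/2) sequentially" using e by (intro order_tendstoD(2)[OF lim2]) auto
  show "eventually (\<lambda>N. Ef N < a) sequentially"
    using eventually_conj[OF ev eventually_ge_at_top[of 1]]
  proof (rule eventually_mono)
    fix N assume N: "exp CC * (real D * tN N) < \<epsilon>/2 \<and> 1 \<le> N"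
    have "Ef N \<le> TT + exp CC * (real D * tN N + Kbar D)" using N by (intro UB) auto
    also have "\<dots> = TT + exp CC * (real D * tN N) + exp CC * Kbar D" by (simp add: algebra_simps)
    finally show "Ef N < a" using N D \<epsilon>_def by linarith
  qed
next
  fix a assume a: "a < TT"
  define \<epsilon> where "\<epsilon> = TT - a"
  have e: "\<epsilon> > 0" using a \<epsilon>_def by simp
  have "eventually (\<lambda>l. TT - \<epsilon>/2 < Al l / real l) sequentially"
    using e by (intro order_tendstoD(1)[OF Al_lim]) auto
  then obtain l where l: "TT - \<epsilon>/2 < Al l / real l" "l \<ge> 1"
    using eventually_conj[OF _ eventually_ge_at_top[of 1]] by (metis (no_types, lifting) eventually_sequentially order_refl)
  have lim: "(\<lambda>N. (\<bar>Al l\<bar> + l * C1) / real N + (Bl l + l * C1) * tN N) \<longlonglongrightarrow> 0 + (Bl l + l * C1) * 0"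
    by (intro tendsto_add tendsto_mult_left tN_lim tendsto_divide_0[OF tendsto_const] filterlim_at_top_imp_at_infinity filterlim_real_sequentially)
  have ev: "eventually (\<lambda>N. (\<bar>Al l\<bar> + l * C1) / real N + (Bl l + l * C1) * tN N < \<epsilon>/2) sequentially"
    using e by (intro order_tendstoD(2)[OF lim[simplified]]) auto
  show "eventually (\<lambda>N. a < Ef N) sequentially"
    using eventually_conj[OF ev eventually_ge_at_top[of 1]]
  proof (rule eventually_mono)
    fix N assume N: "(\<bar>Al l\<bar> + l * C1) / real N + (Bl l + l * C1) * tN N < \<epsilon>/2 \<and> 1 \<le> N"
    have "Ef N \<ge> Al l / l - (\<bar>Al l\<bar> + l * C1) / N - (Bl l + l * C1) * tN N" using N l by (intro LB) auto
    then show "a < Ef N" using N l \<epsilon>_def by linarith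
  qed
qed

end

theorem mainTheorem6:
  fixes K :: "nat \<Rightarrow> real" and L :: "real \<Rightarrow> real" and \<alpha> :: real
    and \<Sigma> :: "real set" and Q :: "real \<Rightarrow> real \<Rightarrow> real" and \<mu> :: "real \<Rightarrow> real"
    and \<gamma> \<beta> h :: real
  assumes "\<alpha> \<ge> 0" and "slowly_varying L"
    and "K 0 = 0" and "\<And>n. n \<ge> 1 \<Longrightarrow> K n = L (real n) * real n powr (-(1 + \<alpha>))"
    and "K sums 1"
    and "finite \<Sigma>" and "\<Sigma> \<noteq> {}"
    and "stochastic_matrix \<Sigma> Q" and "irreducible_matrix \<Sigma> Q"
    and "invariant_distribution \<Sigma> Q \<mu>"
    and "0 < \<gamma>" and "\<gamma> < 1" and "\<beta> \<ge> 0"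
  shows "(\<lambda>N. markov_expect \<Sigma> \<mu> (QN Q \<gamma> N) N (\<lambda>\<omega>. ln (Zpart K \<beta> h \<omega> N) / real N))
           \<longlonglongrightarrow> (\<Sum>x\<in>\<Sigma>. \<mu> x * hom_F K (h + \<beta> * x))"
proof -
  interpret Setup K L \<alpha> \<Sigma> Q \<mu> \<gamma> \<beta> h using assms by unfold_locales
  show ?thesis using Ef_lim unfolding Ef_def[abs_def] TT_def .
qed

end
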